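(* Let $G_1,G_2$ be nondeterministic automata ($G_i=\langle\Sigma_{i,\tau},Q_i,\rightarrow_i,Q_i^0\rangle$) with secret states $Q_i^S\subseteq Q_i$, and equip $G_1\|G_2$ with secret states $\{(x_1,x_2)\mid x_1\in Q_1^S\text{ or }x_2\in Q_2^S\}$; assume $UR(Q_i^0)\not\subseteq Q_i^S$ for $i=1,2$. For $i=1,2$, let $\sim_o$ be an opaque observation equivalence on $G_i$ with quotient $\tilde G_i$ (secret states $\{[x]\mid x\in Q_i^S\}$), let $H_{i,ob}$ be the quotient of $det(\tilde G_i)$ modulo an opaque bisimulation, $H_{i,b}$ the quotient of $det(\tilde G_i)$ modulo a bisimulation, and $H_{i,obd}$ the desired observer of $H_{i,ob}$ (delete classes $[X]$ with $X$ consisting only of secret states, keep reachable part). Let $T'_i=TPO(H_{i,obd},H_{i,b})$, let $G_i^T$ be the transformed automaton of $T'_i$, let $T=TPO(det_d(G_1\|G_2),det(G_1\|G_2))$ be the largest monolithic three-player observer w.r.t. $G_1\|G_2$, and let $\rho$ be the renaming map. Then for every string $s$ defined from the initial state of $G_1^T\|G_2^T$, the string $\rho(s)$ labels a path from the initial state of $T$.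
   Context: Automata: a (nondeterministic) automaton $G=\langle\Sigma_\tau,Q,\rightarrow,Q^0\rangle$ has finite observable alphabet $\Sigma$, special unobservable symbol $\tau$, $\Sigma_\tau=\Sigma\cup\{\tau\}$, $\rightarrow\subseteq Q\times\Sigma_\tau\times Q$, initial states $Q^0$. Deterministic: one initial state, no $\tau$-transitions, functional. $p\overset{s}{\Rightarrow}q$ ($s\in\Sigma^*$): a path from $p$ to $q$ whose labels with $\tau$'s deleted spell $s$. $UR(B)=\{q\mid b\overset{\varepsilon}{\Rightarrow}q,\ b\in B\}$. Observer $det(G)$: deterministic over $\Sigma$, initial state $UR(Q^0)$, $X\xrightarrow{\sigma}Y$ iff $Y=UR(\{y\mid x\xrightarrow{\sigma}y,\ x\in X\})\ne\emptyset$, reachable part. Desired observer $det_d(G)$: $det(G)$ with every state $X\subseteq Q^S$ deleted, reachable part kept. Quotient modulo equivalence $\sim$: classes as states, $[x]\xrightarrow{\sigma}[y]$ iff $x'\xrightarrow{\sigma}y'$ for some $x'\in[x],y'\in[y]$, classes of initial states initial. Bisimulation: equivalence $\approx$ with $x_1\approx x_2$, $x_1\xrightarrow{\sigma}y_1$ implying $x_2\xrightarrow{\sigma}y_2$ for some $y_2\approx y_1$. Opaque observation equivalence on $G$: equivalence $\sim_o$ on $Q$ such that $x_1\sim_o x_2$ implies (i) whenever $x_1\overset{s}{\Rightarrow}y_1$ there is $y_2\sim_o y_1$ with $x_2\overset{s}{\Rightarrow}y_2$, and (ii) $x_1\in Q^S\iff x_2\in Q^S$. Opaque bisimulation on $det(G)$: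 equivalence $\approx_o$ on its states with $X_1\approx_o X_2$ implying (i) whenever $X_1\xrightarrow{s}Y_1$ there is $Y_2\approx_o Y_1$ with $X_2\xrightarrow{s}Y_2$, and (ii) $X_1\subseteq Q^S\iff X_2\subseteq Q^S$. Synchronous composition of $A_1$ (alphabet $\Sigma_1$) and $A_2$ (alphabet $\Sigma_2$): states $Q_1\times Q_2$, initial $Q_1^0\times Q_2^0$, marked $Q_1^m\times Q_2^m$; shared events ($\Sigma_1\cap\Sigma_2$) move both components, events in $(\Sigma_1\setminus\Sigma_2)\cup\{\tau\}$ move only the first, events in $(\Sigma_2\setminus\Sigma_1)\cup\{\tau\}$ move only the second. Largest three-player observer $TPO(D,F)$ for deterministic $D=\langle\Sigma,X_D,\rightarrow_D,d_0\rangle$, $F=\langle\Sigma,X_F,\rightarrow_F,f_0\rangle$: with fresh symbol $\epsilon$ and fresh erasure symbols $\Sigma^r=\{\sigma\to\epsilon\mid\sigma\in\Sigma\}$, states are $Y$-states $(d,f)$, $Z$-states $Z((d,f),e)$ ($e\in\Sigma$, its observable component), $W$-states $W((d,f),a)$ ($a\in\Sigma\cup\Sigma^r$, its action component); initial state $(d_0,f_0)$; only reachable states; transitions exactly: (1) $(d,f)\xrightarrow{e}Z((d,f),e)$ if $e$ defined at $f$ in $F$; (2) $Z((d,f),e)\xrightarrow{\theta}Z((d',f),e)$ for $\theta\in\Sigma$ if $d\xrightarrow{\theta}_Dd'$; (3) $Z((d,f),e)\xrightarrow{\epsilon}W((d,f),e)$ if $e$ defined at $d$ in $D$ and at $f$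 in $F$; (4) $Z((d,f),e)\xrightarrow{e\to\epsilon}W((d,f),e\to\epsilon)$ if $e$ defined at $f$ in $F$; (5) $W((d,f),e)\xrightarrow{e}(d',f')$ with $d\xrightarrow{e}_Dd'$, $f\xrightarrow{e}_Ff'$; (6) $W((d,f),e\to\epsilon)\xrightarrow{e}(d,f')$ with $f\xrightarrow{e}_Ff'$. Transformed automaton: for a TPO $T_i$ over alphabet $\Sigma_i$ and the other index $j$, introduce fresh formal symbols $\theta_e$ and $\sigma_{a,w}$ (all distinct from each other and from events). Let $E_i$ be the set of observable components of $Z$-states of $T_i$ and $A_i$ the set of action components of its $W$-states. $G_i^T$ is the deterministic automaton with the states of $T_i$, initial state the initial $Y$-state, marked states all $Y$-states, and transitions: (a) $y\xrightarrow{e}z$ for each transition $y\xrightarrow{e}z$ of $T_i$ out of a $Y$-state; (b) $z\xrightarrow{\theta_e}q$ for each transition $z\xrightarrow{\theta}q$ of $T_i$ out of a $Z$-state $z$ with observable component $e$; (c) $w\xrightarrow{e_{a,w}}y$ for each transition $w\xrightarrow{e}y$ of $T_i$ out of a $W$-state with action component $a$; (d) a self-loop $y\xrightarrow{\alpha}y$ at every $Y$-state for every $\alpha\in\Sigma_j\setminus\Sigma_i$. Its alphabet is $\Sigma_{G_i^T}=\Sigma_i\cup(\Sigma_j\setminus\Sigma_i)\cup\{\theta_e\mid\theta\in\Sigma_i\cup\{\epsilon\}\cup\Sigma_i^r,\ e\in E_i\}\cup\{\sigma_{a,w}\mid\sigma\in\Sigma_i,\ a\in A_i\}\cup\{\beta_\alpha,\beta_{\alpha,w},\beta_{\alpha\to\epsilon,w}\mid\beta\in\Sigma_i\cap\Sigma_j,\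 \alpha\in\Sigma_j\setminus\Sigma_i\}$. Renaming: $\rho(e)=e$ for events, $\rho(\theta_e)=\theta$, $\rho(\sigma_{a,w})=\sigma$, extended letter-by-letter to strings. *)

theory Defs
  imports Main
begin

datatype 'e lab = Tau | Ev 'e

text \<open>Deterministic automata are the special case with one initial state, no Tau transitions
  and functional transitions; they use the same record.\<close>
record ('q, 'e) aut =
  a_alph   :: "'e set"
  a_states :: "'q set"
  a_trans  :: "('q \<times> 'e lab \<times> 'q) set"
  a_init   :: "'q set"
  a_marked :: "'q set"

definition wf_aut :: "('q, 'e) aut \<Rightarrow> bool" where
  "wf_aut G \<longleftrightarrow> finite (a_alph G)
     \<and> a_trans G \<subseteq> a_states G \<times> (insert Tau (Ev ` a_alph G)) \<times> a_states G
     \<and> a_init G \<subseteq> a_states G \<and> a_marked G \<subseteq> a_states G"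

definition deterministic :: "('q, 'e) aut \<Rightarrow> bool" where
  "deterministic G \<longleftrightarrow> (\<exists>q0. a_init G = {q0})
     \<and> (\<forall>p q. (p, Tau, q) \<notin> a_trans G)
     \<and> (\<forall>p l q q'. (p, l, q) \<in> a_trans G \<longrightarrow> (p, l, q') \<in> a_trans G \<longrightarrow> q = q')"

inductive wtrans :: "('q, 'e) aut \<Rightarrow> 'q \<Rightarrow> 'e list \<Rightarrow> 'q \<Rightarrow> bool" for G where
  wt_refl: "wtrans G p [] p"
| wt_tau:  "(p, Tau, p') \<in> a_trans G \<Longrightarrow> wtrans G p' s q \<Longrightarrow> wtrans G p s q"
| wt_ev:   "(p, Ev a, p') \<in> a_trans G \<Longrightarrow> wtrans G p' s q \<Longrightarrow> wtrans G p (a # s) q"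

inductive run :: "('q, 'e) aut \<Rightarrow> 'q \<Rightarrow> 'e list \<Rightarrow> 'q \<Rightarrow> bool" for G where
  run_nil:  "run G p [] p"
| run_cons: "(p, Ev a, p') \<in> a_trans G \<Longrightarrow> run G p' s q \<Longrightarrow> run G p (a # s) q"

definition UR :: "('q, 'e) aut \<Rightarrow> 'q set \<Rightarrow> 'q set" where
  "UR G B = {q. \<exists>b\<in>B. wtrans G b [] q}"

definition reachable_set :: "('q, 'e) aut \<Rightarrow> 'q set" where
  "reachable_set A = {q. \<exists>q0\<in>a_init A.
      (q0, q) \<in> {(p, p'). \<exists>l. (p, l, p') \<in> a_trans A}\<^sup>*}"

definition reach_part :: "('q, 'e) aut \<Rightarrow> ('q, 'e) aut" where
  "reach_part A = \<lparr> a_alph = a_alph A,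
                     a_states = a_states A \<inter> reachable_set A,
                     a_trans = {(p, l, q). (p, l, q) \<in> a_trans A \<and> p \<in> reachable_set A},
                     a_init = a_init A,
                     a_marked = a_marked A \<inter> reachable_set A \<rparr>"

definition delete_states :: "('q, 'e) aut \<Rightarrow> ('q \<Rightarrow> bool) \<Rightarrow> ('q, 'e) aut" where
  "delete_states A P = \<lparr> a_alph = a_alph A,
                     a_states = {q \<in> a_states A. \<not> P q},
                     a_trans = {(p, l, q). (p, l, q) \<in> a_trans A \<and> \<not> P p \<and> \<not> P q},
                     a_init = {q \<in> a_init A. \<not> P q},
                     a_marked = {q \<in> a_marked A. \<not> P q} \<rparr>"

definition desired_part :: "('q, 'e) aut \<Rightarrow> ('q \<Rightarrow> bool) \<Rightarrow> ('q, 'e) aut" where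
  "desired_part A P = reach_part (delete_states A P)"

definition post :: "('q, 'e) aut \<Rightarrow> 'q set \<Rightarrow> 'e \<Rightarrow> 'q set" where
  "post G X \<sigma> = {y. \<exists>x\<in>X. (x, Ev \<sigma>, y) \<in> a_trans G}"

definition det :: "('q, 'e) aut \<Rightarrow> ('q set, 'e) aut" where
  "det G = reach_part
     \<lparr> a_alph = a_alph G,
       a_states = Pow (a_states G),
       a_trans = {(X, Ev \<sigma>, Y) | X \<sigma> Y. \<sigma> \<in> a_alph G \<and> Y = UR G (post G X \<sigma>) \<and> Y \<noteq> {}},
       a_init = {UR G (a_init G)},
       a_marked = {X. X \<inter> a_marked G \<noteq> {}} \<rparr>"

definition det_d :: "('q, 'e) aut \<Rightarrow> 'q set \<Rightarrow> ('q set, 'e) aut" where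
  "det_d G S = desired_part (det G) (\<lambda>X. X \<subseteq> S)"

definition quot :: "('q, 'e) aut \<Rightarrow> ('q \<times> 'q) set \<Rightarrow> ('q set, 'e) aut" where
  "quot A r = \<lparr> a_alph = a_alph A,
                a_states = a_states A // r,
                a_trans = {(r``{x}, l, r``{y}) | x l y. (x, l, y) \<in> a_trans A},
                a_init = {r``{x} | x. x \<in> a_init A},
                a_marked = {r``{x} | x. x \<in> a_marked A} \<rparr>"

definition quot_set :: "('q \<times> 'q) set \<Rightarrow> 'q set \<Rightarrow> 'q set set" where
  "quot_set r S = {r``{x} | x. x \<in> S}"

definition bisimulation :: "('q, 'e) aut \<Rightarrow> ('q \<times> 'q) set \<Rightarrow> bool" where
  "bisimulation A r \<longleftrightarrow> equiv (a_states A) r \<and>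
     (\<forall>x1 x2. (x1, x2) \<in> r \<longrightarrow>
        (\<forall>l y1. (x1, l, y1) \<in> a_trans A \<longrightarrow> (\<exists>y2. (x2, l, y2) \<in> a_trans A \<and> (y2, y1) \<in> r)))"

definition opaque_obs_equiv :: "('q, 'e) aut \<Rightarrow> 'q set \<Rightarrow> ('q \<times> 'q) set \<Rightarrow> bool" where
  "opaque_obs_equiv G S r \<longleftrightarrow> equiv (a_states G) r \<and>
     (\<forall>x1 x2. (x1, x2) \<in> r \<longrightarrow>
        (\<forall>s y1. wtrans G x1 s y1 \<longrightarrow> (\<exists>y2. (y2, y1) \<in> r \<and> wtrans G x2 s y2))
        \<and> (x1 \<in> S \<longleftrightarrow> x2 \<in> S))"

text \<open>Opaque bisimulation on an observer whose states are sets of states; S are the secret states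
  of the underlying automaton.\<close>
definition opaque_bisim :: "('q set, 'e) aut \<Rightarrow> 'q set \<Rightarrow> ('q set \<times> 'q set) set \<Rightarrow> bool" where
  "opaque_bisim D S r \<longleftrightarrow> equiv (a_states D) r \<and>
     (\<forall>X1 X2. (X1, X2) \<in> r \<longrightarrow>
        (\<forall>s Y1. run D X1 s Y1 \<longrightarrow> (\<exists>Y2. (Y2, Y1) \<in> r \<and> run D X2 s Y2))
        \<and> (X1 \<subseteq> S \<longleftrightarrow> X2 \<subseteq> S))"

definition sync :: "('q1, 'e) aut \<Rightarrow> ('q2, 'e) aut \<Rightarrow> ('q1 \<times> 'q2, 'e) aut" where
  "sync A1 A2 = \<lparr> a_alph = a_alph A1 \<union> a_alph A2,
     a_states = a_states A1 \<times> a_states A2,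
     a_trans =
        {((x1, x2), Ev a, (y1, y2)) | x1 x2 a y1 y2.
            a \<in> a_alph A1 \<inter> a_alph A2 \<and> (x1, Ev a, y1) \<in> a_trans A1 \<and> (x2, Ev a, y2) \<in> a_trans A2}
      \<union> {((x1, x2), l, (y1, x2)) | x1 x2 l y1.
            (l = Tau \<or> (\<exists>a. l = Ev a \<and> a \<in> a_alph A1 - a_alph A2))
            \<and> (x1, l, y1) \<in> a_trans A1 \<and> x2 \<in> a_states A2}
      \<union> {((x1, x2), l, (x1, y2)) | x1 x2 l y2.
            (l = Tau \<or> (\<exists>a. l = Ev a \<and> a \<in> a_alph A2 - a_alph A1))
            \<and> (x2, l, y2) \<in> a_trans A2 \<and> x1 \<in> a_states A1},
     a_init = a_init A1 \<times> a_init A2,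
     a_marked = a_marked A1 \<times> a_marked A2 \<rparr>"

definition sync_secret :: "'q1 set \<Rightarrow> 'q2 set \<Rightarrow> ('q1 \<times> 'q2) set" where
  "sync_secret S1 S2 = {(x1, x2). x1 \<in> S1 \<or> x2 \<in> S2}"

text \<open>Labels of a TPO: events, the fresh symbol epsilon, erasure symbols (sigma -> epsilon).\<close>
datatype 'e tlab = TEv 'e | Eps | Erase 'e

datatype ('d, 'f, 'e) tstate = Y 'd 'f | Z 'd 'f 'e | W 'd 'f "'e tlab"

definition defined_at :: "('q, 'e) aut \<Rightarrow> 'e \<Rightarrow> 'q \<Rightarrow> bool" where
  "defined_at A e q \<longleftrightarrow> (\<exists>q'. (q, Ev e, q') \<in> a_trans A)"

definition tpo_trans :: "('d, 'e) aut \<Rightarrow> ('f, 'e) aut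
     \<Rightarrow> (('d, 'f, 'e) tstate \<times> 'e tlab lab \<times> ('d, 'f, 'e) tstate) set" where
  "tpo_trans D F =
      {(Y d f, Ev (TEv e), Z d f e) | d f e. defined_at F e f}
    \<union> {(Z d f e, Ev (TEv \<theta>), Z d' f e) | d f e \<theta> d'. (d, Ev \<theta>, d') \<in> a_trans D}
    \<union> {(Z d f e, Ev Eps, W d f (TEv e)) | d f e. defined_at D e d \<and> defined_at F e f}
    \<union> {(Z d f e, Ev (Erase e), W d f (Erase e)) | d f e. defined_at F e f}
    \<union> {(W d f (TEv e), Ev (TEv e), Y d' f') | d f e d' f'.
          (d, Ev e, d') \<in> a_trans D \<and> (f, Ev e, f') \<in> a_trans F}
    \<union> {(W d f (Erase e), Ev (TEv e), Y d f') | d f e f'. (f, Ev e, f') \<in> a_trans F}"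

definition TPO :: "('d, 'e) aut \<Rightarrow> ('f, 'e) aut \<Rightarrow> (('d, 'f, 'e) tstate, 'e tlab) aut" where
  "TPO D F = reach_part
     \<lparr> a_alph = TEv ` a_alph D \<union> {Eps} \<union> Erase ` a_alph D,
       a_states = UNIV,
       a_trans = tpo_trans D F,
       a_init = {Y d0 f0 | d0 f0. d0 \<in> a_init D \<and> f0 \<in> a_init F},
       a_marked = {} \<rparr>"

text \<open>Events of transformed automata: ordinary events, theta_e (Theta theta e), sigma_{a,w} (SigW sigma a).\<close>
datatype 'e xlab = XEv 'e | Theta "'e tlab" 'e | SigW 'e "'e tlab"

definition obs_comps :: "(('d, 'f, 'e) tstate, 'e tlab) aut \<Rightarrow> 'e set" where
  "obs_comps T = {e. \<exists>d f. Z d f e \<in> a_states T}"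

definition act_comps :: "(('d, 'f, 'e) tstate, 'e tlab) aut \<Rightarrow> 'e tlab set" where
  "act_comps T = {a. \<exists>d f. W d f a \<in> a_states T}"

text \<open>Transformed automaton of TPO T_i over Sigma_i, with Sigma_j the alphabet of the other component.\<close>
definition transformed :: "(('d, 'f, 'e) tstate, 'e tlab) aut \<Rightarrow> 'e set \<Rightarrow> 'e set
     \<Rightarrow> (('d, 'f, 'e) tstate, 'e xlab) aut" where
  "transformed T Si Sj = \<lparr>
     a_alph = XEv ` Si \<union> XEv ` (Sj - Si)
        \<union> {Theta \<theta> e | \<theta> e. \<theta> \<in> TEv ` Si \<union> {Eps} \<union> Erase ` Si \<and> e \<in> obs_comps T}
        \<union> {SigW \<sigma> a | \<sigma> a. \<sigma> \<in> Si \<and> a \<in> act_comps T}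
        \<union> {x. \<exists>\<beta> \<alpha>. \<beta> \<in> Si \<inter> Sj \<and> \<alpha> \<in> Sj - Si \<and>
               (x = Theta (TEv \<beta>) \<alpha> \<or> x = SigW \<beta> (TEv \<alpha>) \<or> x = SigW \<beta> (Erase \<alpha>))},
     a_states = a_states T,
     a_trans =
         {(Y d f, Ev (XEv e), q) | d f e q. (Y d f, Ev (TEv e), q) \<in> a_trans T}
       \<union> {(Z d f e, Ev (Theta \<theta> e), q) | d f e \<theta> q. (Z d f e, Ev \<theta>, q) \<in> a_trans T}
       \<union> {(W d f a, Ev (SigW \<sigma> a), q) | d f a \<sigma> q. (W d f a, Ev (TEv \<sigma>), q) \<in> a_trans T}
       \<union> {(Y d f, Ev (XEv \<alpha>), Y d f) | d f \<alpha>. Y d f \<in> a_states T \<and> \<alpha> \<in> Sj - Si},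
     a_init = a_init T,
     a_marked = {Y d f | d f. Y d f \<in> a_states T} \<rparr>"

fun rho :: "'e xlab \<Rightarrow> 'e tlab" where
  "rho (XEv e) = TEv e"
| "rho (Theta \<theta> e) = \<theta>"
| "rho (SigW \<sigma> a) = TEv \<sigma>"

definition H_ob :: "('q, 'e) aut \<Rightarrow> ('q \<times> 'q) set \<Rightarrow> ('q set set \<times> 'q set set) set
     \<Rightarrow> ('q set set set, 'e) aut" where
  "H_ob G oe ob = quot (det (quot G oe)) ob"

definition H_b :: "('q, 'e) aut \<Rightarrow> ('q \<times> 'q) set \<Rightarrow> ('q set set \<times> 'q set set) set
     \<Rightarrow> ('q set set set, 'e) aut" where
  "H_b G oe b = quot (det (quot G oe)) b"

definition H_obd :: "('q, 'e) aut \<Rightarrow> 'q set \<Rightarrow> ('q \<times> 'q) set \<Rightarrow> ('q set set \<times> 'q set set) set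
     \<Rightarrow> ('q set set set, 'e) aut" where
  "H_obd G S oe ob = desired_part (H_ob G oe ob) (\<lambda>C. \<exists>X\<in>C. X \<subseteq> quot_set oe S)"

definition local_TPO :: "('q, 'e) aut \<Rightarrow> 'q set \<Rightarrow> ('q \<times> 'q) set
     \<Rightarrow> ('q set set \<times> 'q set set) set \<Rightarrow> ('q set set \<times> 'q set set) set
     \<Rightarrow> (('q set set set, 'q set set set, 'e) tstate, 'e tlab) aut" where
  "local_TPO G S oe ob b = TPO (H_obd G S oe ob) (H_b G oe b)"

end

theory Submission
  imports Defs
begin


lemma wtrans_app: "wtrans G x s y \<Longrightarrow> wtrans G y t z \<Longrightarrow> wtrans G x (s@t) z"
  by (induction rule: wtrans.induct) (auto intro: wtrans.intros)

lemma wtrans_ev1: "(x, Ev a, y) \<in> a_trans G \<Longrightarrow> wtrans G x [a] y"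
  by (auto intro: wtrans.intros)

lemma wtrans_tau1: "(x, Tau, y) \<in> a_trans G \<Longrightarrow> wtrans G x [] y"
  by (auto intro: wtrans.intros)

lemma wtrans_cons_dest:
  "wtrans G x s z \<Longrightarrow> s = a # t \<Longrightarrow> \<exists>x1 y. wtrans G x [] x1 \<and> (x1, Ev a, y) \<in> a_trans G \<and> wtrans G y t z"
proof (induction arbitrary: a t rule: wtrans.induct)
  case (wt_refl p) then show ?case by simp
next
  case (wt_tau p p' s q)
  then obtain x1 y where "wtrans G p' [] x1" "(x1, Ev a, y) \<in> a_trans G" "wtrans G y t q" by blast
  then show ?case using wt_tau(1) by (blast intro: wtrans.intros)
next
  case (wt_ev p b p' s q)
  then show ?case by (blast intro: wtrans.intros)
qed

lemma wtrans_single: "wtrans G x [a] z \<Longrightarrow> \<exists>x1 y. wtrans G x [] x1 \<and> (x1, Ev a, y) \<in> a_trans G \<and> wtrans G y [] z"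
  using wtrans_cons_dest by fastforce

lemma wtrans_states:
  "wtrans G x s y \<Longrightarrow> a_trans G \<subseteq> a_states G \<times> UNIV \<times> a_states G \<Longrightarrow> x \<in> a_states G \<Longrightarrow> y \<in> a_states G"
  by (induction rule: wtrans.induct) auto

lemma wf_trans: "wf_aut G \<Longrightarrow> a_trans G \<subseteq> a_states G \<times> UNIV \<times> a_states G"
  unfolding wf_aut_def by blast

lemma wf_trans_alph: "wf_aut G \<Longrightarrow> (x, Ev a, y) \<in> a_trans G \<Longrightarrow> a \<in> a_alph G"
  unfolding wf_aut_def by blast

lemma UR_mono_base: "A \<subseteq> UR G A"
  unfolding UR_def by (auto intro: wtrans.intros)

lemma UR_idem: "UR G (UR G A) = UR G A"
  unfolding UR_def using wtrans_app[where s="[]" and t="[]"] by (fastforce intro: wtrans.intros)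

lemma UR_states: "a_trans G \<subseteq> a_states G \<times> UNIV \<times> a_states G \<Longrightarrow> A \<subseteq> a_states G \<Longrightarrow> UR G A \<subseteq> a_states G"
  unfolding UR_def using wtrans_states by fastforce

lemma post_states: "a_trans G \<subseteq> a_states G \<times> UNIV \<times> a_states G \<Longrightarrow> post G X \<sigma> \<subseteq> a_states G"
  unfolding post_def by blast



lemma quot_sel[simp]:
  "a_trans (quot G r) = {(r``{x}, l, r``{y}) | x l y. (x, l, y) \<in> a_trans G}"
  "a_states (quot G r) = a_states G // r"
  "a_init (quot G r) = {r``{x} | x. x \<in> a_init G}"
  "a_alph (quot G r) = a_alph G"
  by (simp_all add: quot_def)

lemma quot_trans_states: "a_trans (quot G oe) \<subseteq> a_states (quot G oe) \<times> UNIV \<times> a_states (quot G oe)"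
  if "a_trans G \<subseteq> a_states G \<times> UNIV \<times> a_states G"
  using that unfolding quot_sel quotient_def by blast

lemma quot_set_sub: "X \<subseteq> a_states G \<Longrightarrow> quot_set oe X \<subseteq> a_states (quot G oe)"
  unfolding quot_set_def quot_sel quotient_def by blast

lemma quot_wtrans_up: "wtrans G x s z \<Longrightarrow> wtrans (quot G oe) (oe``{x}) s (oe``{z})"
proof (induction rule: wtrans.induct)
  case (wt_refl p) then show ?case by (rule wtrans.intros)
next
  case (wt_tau p p' s q)
  have "(oe``{p}, Tau, oe``{p'}) \<in> a_trans (quot G oe)" using wt_tau(1) by auto
  then show ?case using wt_tau by (blast intro: wtrans.intros)
next
  case (wt_ev p a p' s q)
  have "(oe``{p}, Ev a, oe``{p'}) \<in> a_trans (quot G oe)" using wt_ev(1) by auto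
  then show ?case using wt_ev by (blast intro: wtrans.intros)
qed

lemma quot_wtrans_down:
  assumes wf: "wf_aut G" and oe: "opaque_obs_equiv G S oe"
  shows "wtrans (quot G oe) C s C' \<Longrightarrow> C = oe``{x} \<Longrightarrow> x \<in> a_states G
     \<Longrightarrow> \<exists>z. z \<in> a_states G \<and> C' = oe``{z} \<and> wtrans G x s z"
proof (induction arbitrary: x rule: wtrans.induct)
  case (wt_refl p) then show ?case by (blast intro: wtrans.intros)
next
  case (wt_tau p p' s q)
  have eq: "equiv (a_states G) oe" using oe unfolding opaque_obs_equiv_def by blast
  from wt_tau(1) obtain x'' y'' where xy: "p = oe``{x''}" "p' = oe``{y''}" "(x'', Tau, y'') \<in> a_trans G"
    by auto
  have st: "x'' \<in> a_states G" "y'' \<in> a_states G" using xy(3) wf_trans[OF wf] by auto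
  have "(x'', x) \<in> oe" using equiv_class_eq_iff[OF eq] xy(1) wt_tau st by auto
  moreover have "wtrans G x'' [] y''" using xy(3) by (rule wtrans_tau1)
  ultimately obtain y2 where y2: "(y2, y'') \<in> oe" "wtrans G x [] y2"
    using oe unfolding opaque_obs_equiv_def by blast
  have "p' = oe``{y2}" "y2 \<in> a_states G" using y2(1) eq xy(2) equiv_class_eq_iff[OF eq] by auto
  then obtain z where "z \<in> a_states G" "q = oe``{z}" "wtrans G y2 s z" using wt_tau.IH by blast
  then show ?case using wtrans_app[OF y2(2)] by fastforce
next
  case (wt_ev p a p' s q)
  have eq: "equiv (a_states G) oe" using oe unfolding opaque_obs_equiv_def by blast
  from wt_ev(1) obtain x'' y'' where xy: "p = oe``{x''}" "p' = oe``{y''}" "(x'', Ev a, y'') \<in> a_trans G"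
    by auto
  have st: "x'' \<in> a_states G" "y'' \<in> a_states G" using xy(3) wf_trans[OF wf] by auto
  have "(x'', x) \<in> oe" using equiv_class_eq_iff[OF eq] xy(1) wt_ev st by auto
  moreover have "wtrans G x'' [a] y''" using xy(3) by (rule wtrans_ev1)
  ultimately obtain y2 where y2: "(y2, y'') \<in> oe" "wtrans G x [a] y2"
    using oe unfolding opaque_obs_equiv_def by blast
  have "p' = oe``{y2}" "y2 \<in> a_states G" using y2(1) eq xy(2) equiv_class_eq_iff[OF eq] by auto
  then obtain z where "z \<in> a_states G" "q = oe``{z}" "wtrans G y2 s z" using wt_ev.IH by blast
  then show ?case using wtrans_app[OF y2(2)] by fastforce
qed

lemma UR_quot:
  assumes wf: "wf_aut G" and oe: "opaque_obs_equiv G S oe" and A: "A \<subseteq> a_states G"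
  shows "UR (quot G oe) (quot_set oe A) = quot_set oe (UR G A)"
proof
  show "UR (quot G oe) (quot_set oe A) \<subseteq> quot_set oe (UR G A)"
  proof
    fix C assume "C \<in> UR (quot G oe) (quot_set oe A)"
    then obtain x where x: "x \<in> A" "wtrans (quot G oe) (oe``{x}) [] C"
      unfolding UR_def quot_set_def by blast
    have xs: "x \<in> a_states G" using A x(1) by blast
    obtain z where "C = oe``{z}" "wtrans G x [] z"
      using quot_wtrans_down[OF wf oe x(2) refl xs] by blast
    then show "C \<in> quot_set oe (UR G A)" using x unfolding UR_def quot_set_def by blast
  qed
next
  show "quot_set oe (UR G A) \<subseteq> UR (quot G oe) (quot_set oe A)"
  proof
    fix C assume "C \<in> quot_set oe (UR G A)"
    then obtain x z where "C = oe``{z}" "x \<in> A" "wtrans G x [] z" unfolding quot_set_def UR_def by blast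
    moreover note quot_wtrans_up[OF this(3), of oe]
    ultimately show "C \<in> UR (quot G oe) (quot_set oe A)" unfolding UR_def quot_set_def by blast
  qed
qed

lemma post_UR_quot:
  assumes wf: "wf_aut G" and oe: "opaque_obs_equiv G S oe" and A: "X \<subseteq> a_states G"
    and cl: "UR G X = X"
  shows "UR (quot G oe) (post (quot G oe) (quot_set oe X) \<sigma>) = quot_set oe (UR G (post G X \<sigma>))"
proof
  show "UR (quot G oe) (post (quot G oe) (quot_set oe X) \<sigma>) \<subseteq> quot_set oe (UR G (post G X \<sigma>))"
  proof
    fix C' assume "C' \<in> UR (quot G oe) (post (quot G oe) (quot_set oe X) \<sigma>)"
    then obtain B x where x: "x \<in> X" "(oe``{x}, Ev \<sigma>, B) \<in> a_trans (quot G oe)"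
         "wtrans (quot G oe) B [] C'"
      unfolding UR_def quot_set_def post_def by blast
    then have "wtrans (quot G oe) (oe``{x}) [\<sigma>] C'" by (blast intro: wtrans.intros)
    have xs: "x \<in> a_states G" using A x(1) by blast
    obtain z where z: "C' = oe``{z}" "wtrans G x [\<sigma>] z"
      using quot_wtrans_down[OF wf oe \<open>wtrans (quot G oe) (oe``{x}) [\<sigma>] C'\<close> refl xs] by blast
    then obtain x1 y where "wtrans G x [] x1" "(x1, Ev \<sigma>, y) \<in> a_trans G" "wtrans G y [] z"
      using wtrans_single by fastforce
    moreover have "x1 \<in> X" using cl x(1) \<open>wtrans G x [] x1\<close> unfolding UR_def by blast
    ultimately have "z \<in> UR G (post G X \<sigma>)" unfolding UR_def post_def by blast
    then show "C' \<in> quot_set oe (UR G (post G X \<sigma>))" using z unfolding quot_set_def by blast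
  qed
next
  show "quot_set oe (UR G (post G X \<sigma>)) \<subseteq> UR (quot G oe) (post (quot G oe) (quot_set oe X) \<sigma>)"
  proof
    fix C assume "C \<in> quot_set oe (UR G (post G X \<sigma>))"
    then obtain x y z where "C = oe``{z}" "x \<in> X" "(x, Ev \<sigma>, y) \<in> a_trans G" "wtrans G y [] z"
      unfolding quot_set_def UR_def post_def by blast
    moreover have "(oe``{x}, Ev \<sigma>, oe``{y}) \<in> a_trans (quot G oe)" using calculation(3) by auto
    moreover have "wtrans (quot G oe) (oe``{y}) [] (oe``{z})" using calculation(4) by (rule quot_wtrans_up)
    ultimately show "C \<in> UR (quot G oe) (post (quot G oe) (quot_set oe X) \<sigma>)"
      unfolding UR_def post_def quot_set_def by blast
  qed
qed



lemma reach_sel[simp]: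
  "a_trans (reach_part A) = {(p, l, q). (p, l, q) \<in> a_trans A \<and> p \<in> reachable_set A}"
  "a_states (reach_part A) = a_states A \<inter> reachable_set A"
  "a_init (reach_part A) = a_init A"
  "a_alph (reach_part A) = a_alph A"
  by (simp_all add: reach_part_def)

lemma del_sel[simp]:
  "a_trans (delete_states A P) = {(p, l, q). (p, l, q) \<in> a_trans A \<and> \<not> P p \<and> \<not> P q}"
  "a_states (delete_states A P) = {q \<in> a_states A. \<not> P q}"
  "a_init (delete_states A P) = {q \<in> a_init A. \<not> P q}"
  "a_alph (delete_states A P) = a_alph A"
  by (simp_all add: delete_states_def)

lemma reach_init: "q \<in> a_init A \<Longrightarrow> q \<in> reachable_set A"
  unfolding reachable_set_def by blast

lemma reach_step: "p \<in> reachable_set A \<Longrightarrow> (p, l, q) \<in> a_trans A \<Longrightarrow> q \<in> reachable_set A"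
  unfolding reachable_set_def by (blast intro: rtrancl_into_rtrancl)

lemma reachable_induct[consumes 1, case_names init step]:
  assumes "q \<in> reachable_set A"
    and I: "\<And>q0. q0 \<in> a_init A \<Longrightarrow> P q0"
    and S: "\<And>p l q. p \<in> reachable_set A \<Longrightarrow> P p \<Longrightarrow> (p, l, q) \<in> a_trans A \<Longrightarrow> P q"
  shows "P q"
proof -
  obtain q0 where q0: "q0 \<in> a_init A" "(q0, q) \<in> {(p, p'). \<exists>l. (p, l, p') \<in> a_trans A}\<^sup>*"
    using assms(1) unfolding reachable_set_def by blast
  from q0(2) have "P q \<and> q \<in> reachable_set A"
  proof (induction rule: rtrancl_induct)
    case base then show ?case using I[OF q0(1)] reach_init[OF q0(1)] by simp
  next
    case (step y z)
    from step(2) obtain l where l: "(y, l, z) \<in> a_trans A" by blast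
    have "P y" "y \<in> reachable_set A" using step(3) by simp_all
    then show ?case using S[OF _ _ l] reach_step[OF _ l] by simp
  qed
  then show ?thesis by blast
qed


lemma reachable_reach_part: "reachable_set (reach_part A) = reachable_set A"
proof
  show "reachable_set (reach_part A) \<subseteq> reachable_set A"
  proof
    fix q assume "q \<in> reachable_set (reach_part A)"
    then show "q \<in> reachable_set A"
    proof (induction rule: reachable_induct)
      case (init q0) then show ?case using reach_init[of q0 A] by simp
    next
      case (step p l q) then show ?case using reach_step[of p A l q] by simp
    qed
  qed
next
  show "reachable_set A \<subseteq> reachable_set (reach_part A)"
  proof
    fix q assume "q \<in> reachable_set A"
    then show "q \<in> reachable_set (reach_part A)"
    proof (induction rule: reachable_induct)
      case (init q0) then show ?case using reach_init[of q0 "reach_part A"] by simp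
    next
      case (step p l q)
      then have "(p, l, q) \<in> a_trans (reach_part A)" by simp
      then show ?case using reach_step[of p "reach_part A" l q] step by simp
    qed
  qed
qed

lemma reachable_delete: "reachable_set (delete_states A P) \<subseteq> reachable_set A"
proof
  fix q assume "q \<in> reachable_set (delete_states A P)"
  then show "q \<in> reachable_set A"
  proof (induction rule: reachable_induct)
    case (init q0) then show ?case using reach_init[of q0 A] by simp
  next
    case (step p l q) then show ?case using reach_step[of p A l q] by simp
  qed
qed

definition det_raw :: "('q, 'e) aut \<Rightarrow> ('q set, 'e) aut" where
  "det_raw G = \<lparr> a_alph = a_alph G,
       a_states = Pow (a_states G),
       a_trans = {(X, Ev \<sigma>, V) | X \<sigma> V. \<sigma> \<in> a_alph G \<and> V = UR G (post G X \<sigma>) \<and> V \<noteq> {}},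
       a_init = {UR G (a_init G)},
       a_marked = {X. X \<inter> a_marked G \<noteq> {}} \<rparr>"

lemma det_eq: "det G = reach_part (det_raw G)"
  unfolding det_def det_raw_def by simp

lemma det_raw_sel[simp]:
  "a_trans (det_raw G) = {(X, Ev \<sigma>, V) | X \<sigma> V. \<sigma> \<in> a_alph G \<and> V = UR G (post G X \<sigma>) \<and> V \<noteq> {}}"
  "a_states (det_raw G) = Pow (a_states G)"
  "a_init (det_raw G) = {UR G (a_init G)}"
  "a_alph (det_raw G) = a_alph G"
  by (simp_all add: det_raw_def)

lemma det_trans:
  "(X, l, V) \<in> a_trans (det G) \<longleftrightarrow>
     (\<exists>\<sigma>. l = Ev \<sigma> \<and> \<sigma> \<in> a_alph G \<and> V = UR G (post G X \<sigma>) \<and> V \<noteq> {}) \<and> X \<in> reachable_set (det_raw G)"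
  unfolding det_eq by auto

lemma det_init: "a_init (det G) = {UR G (a_init G)}"
  unfolding det_eq by simp

lemma det_alph: "a_alph (det G) = a_alph G"
  unfolding det_eq by simp

lemma det_raw_reach_sub:
  assumes tr: "a_trans G \<subseteq> a_states G \<times> UNIV \<times> a_states G" and ini: "a_init G \<subseteq> a_states G"
  shows "X \<in> reachable_set (det_raw G) \<Longrightarrow> X \<subseteq> a_states G"
proof -
  assume "X \<in> reachable_set (det_raw G)"
  then show "X \<subseteq> a_states G"
  proof (induction rule: reachable_induct)
    case (init q0) then show ?case using UR_states[OF tr ini] by simp
  next
    case (step p l q)
    then show ?case using UR_states[OF tr post_states[OF tr], of p] by auto
  qed
qed

lemma det_states:
  assumes tr: "a_trans G \<subseteq> a_states G \<times> UNIV \<times> a_states G" and ini: "a_init G \<subseteq> a_states G"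
  shows "a_states (det G) = reachable_set (det_raw G)"
  unfolding det_eq using det_raw_reach_sub[OF tr ini] by auto

lemma det_reach: "reachable_set (det G) = reachable_set (det_raw G)"
  unfolding det_eq by (rule reachable_reach_part)



definition RD :: "('q, 'e) aut \<Rightarrow> 'q set \<Rightarrow> ('q \<times> 'q) set \<Rightarrow> ('q set set \<times> 'q set set) set
   \<Rightarrow> 'q set set set \<Rightarrow> 'q set \<Rightarrow> bool" where
  "RD G S oe ob C X \<longleftrightarrow> X \<subseteq> a_states G \<and> UR G X = X \<and> X \<noteq> {} \<and> \<not> X \<subseteq> S
     \<and> quot_set oe X \<in> a_states (det (quot G oe)) \<and> C = ob``{quot_set oe X}"

definition RF :: "('q, 'e) aut \<Rightarrow> ('q \<times> 'q) set \<Rightarrow> ('q set set \<times> 'q set set) set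
   \<Rightarrow> 'q set set set \<Rightarrow> 'q set \<Rightarrow> bool" where
  "RF G oe b C X \<longleftrightarrow> X \<subseteq> a_states G \<and> UR G X = X \<and> X \<noteq> {}
     \<and> quot_set oe X \<in> a_states (det (quot G oe)) \<and> C = b``{quot_set oe X}"

lemma quot_set_empty: "quot_set oe X = {} \<longleftrightarrow> X = {}"
  unfolding quot_set_def by blast

lemma quot_init_sub: "a_init G \<subseteq> a_states G \<Longrightarrow> a_init (quot G oe) \<subseteq> a_states (quot G oe)"
  unfolding quot_sel quotient_def by blast

lemma detq_states:
  assumes wf: "wf_aut G"
  shows "a_states (det (quot G oe)) = reachable_set (det_raw (quot G oe))"
proof -
  have tr: "a_trans G \<subseteq> a_states G \<times> UNIV \<times> a_states G" using wf by (rule wf_trans)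
  have ini: "a_init G \<subseteq> a_states G" using wf unfolding wf_aut_def by blast
  show ?thesis using det_states[OF quot_trans_states[OF tr] quot_init_sub[OF ini]] .
qed

lemma detq_trans_from:
  assumes wf: "wf_aut G" and oe: "opaque_obs_equiv G S oe"
    and X: "X \<subseteq> a_states G" "UR G X = X"
    and tr: "(quot_set oe X, l, V) \<in> a_trans (det (quot G oe))"
  shows "\<exists>\<sigma>. l = Ev \<sigma> \<and> \<sigma> \<in> a_alph G \<and> V = quot_set oe (UR G (post G X \<sigma>))
           \<and> UR G (post G X \<sigma>) \<noteq> {} \<and> V \<in> a_states (det (quot G oe))"
proof -
  from tr obtain \<sigma> where s: "l = Ev \<sigma>" "\<sigma> \<in> a_alph G"
      "V = UR (quot G oe) (post (quot G oe) (quot_set oe X) \<sigma>)" "V \<noteq> {}"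
      "quot_set oe X \<in> reachable_set (det_raw (quot G oe))"
    unfolding det_trans by auto
  have V: "V = quot_set oe (UR G (post G X \<sigma>))" using s(3) post_UR_quot[OF wf oe X] by simp
  have "V \<in> reachable_set (det_raw (quot G oe))"
    using reach_step[OF s(5)] tr unfolding det_eq by auto
  then show ?thesis using s V quot_set_empty detq_states[OF wf] by metis
qed

lemma detq_trans_to:
  assumes wf: "wf_aut G" and oe: "opaque_obs_equiv G S oe"
    and X: "X \<subseteq> a_states G" "UR G X = X" "quot_set oe X \<in> a_states (det (quot G oe))"
    and s: "\<sigma> \<in> a_alph G" "UR G (post G X \<sigma>) \<noteq> {}"
  shows "(quot_set oe X, Ev \<sigma>, quot_set oe (UR G (post G X \<sigma>))) \<in> a_trans (det (quot G oe))"
proof -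
  have r: "quot_set oe X \<in> reachable_set (det_raw (quot G oe))" using X(3) detq_states[OF wf] by simp
  show ?thesis unfolding det_trans using r s by (simp add: post_UR_quot[OF wf oe X(1,2)] quot_set_empty)
qed

lemma UR_post_closed: "UR G (UR G (post G X \<sigma>)) = UR G (post G X \<sigma>)"
  by (rule UR_idem)

lemma quot_set_notsub:
  "\<not> quot_set oe X \<subseteq> quot_set oe S \<Longrightarrow> \<not> X \<subseteq> S"
  unfolding quot_set_def by blast

lemma H_obd_trans:
  "(C, l, C') \<in> a_trans (H_obd G S oe ob) \<Longrightarrow>
    (C, l, C') \<in> a_trans (H_ob G oe ob) \<and> \<not> (\<exists>X\<in>C. X \<subseteq> quot_set oe S) \<and> \<not> (\<exists>X\<in>C'. X \<subseteq> quot_set oe S)"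
  unfolding H_obd_def desired_part_def by simp

lemma L1:
  assumes wf: "wf_aut G" and oe: "opaque_obs_equiv G S oe"
    and ob: "opaque_bisim (det (quot G oe)) (quot_set oe S) ob"
    and R: "RD G S oe ob C X"
    and tr: "(C, Ev \<sigma>, C') \<in> a_trans (H_obd G S oe ob)"
  shows "\<sigma> \<in> a_alph G \<and> RD G S oe ob C' (UR G (post G X \<sigma>))"
proof -
  let ?D = "det (quot G oe)"
  let ?Xq = "quot_set oe X"
  let ?X' = "UR G (post G X \<sigma>)"
  have R': "X \<subseteq> a_states G" "UR G X = X" "?Xq \<in> a_states ?D" "C = ob``{?Xq}"
    using R unfolding RD_def by auto
  have eq: "equiv (a_states ?D) ob" using ob unfolding opaque_bisim_def by blast
  from H_obd_trans[OF tr] have t: "(C, Ev \<sigma>, C') \<in> a_trans (H_ob G oe ob)"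
    and nd: "\<not> (\<exists>X\<in>C'. X \<subseteq> quot_set oe S)" by auto
  from t obtain X0 X0' where x0: "C = ob``{X0}" "C' = ob``{X0'}" "(X0, Ev \<sigma>, X0') \<in> a_trans ?D"
    unfolding H_ob_def quot_sel by blast
  have X0s: "X0 \<in> a_states ?D"
    using x0(3) detq_states[OF wf] unfolding det_trans by auto
  have "(X0, ?Xq) \<in> ob" using eq x0(1) R'(3,4) X0s equiv_class_eq_iff[OF eq] by blast
  moreover have "run ?D X0 [\<sigma>] X0'" using x0(3) by (blast intro: run.intros)
  ultimately obtain Y2 where y2: "(Y2, X0') \<in> ob" "run ?D ?Xq [\<sigma>] Y2"
    using ob unfolding opaque_bisim_def by blast
  from y2(2) have "(?Xq, Ev \<sigma>, Y2) \<in> a_trans ?D"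
    by (auto elim: run.cases)
  from detq_trans_from[OF wf oe R'(1,2) this] have
    y: "\<sigma> \<in> a_alph G" "Y2 = quot_set oe ?X'" "?X' \<noteq> {}" "Y2 \<in> a_states ?D" by auto
  have C': "C' = ob``{Y2}" using y2(1) x0(2) equiv_class_eq_iff[OF eq] by blast
  have "Y2 \<in> C'" using C' y(4) eq unfolding equiv_def refl_on_def by blast
  then have "\<not> Y2 \<subseteq> quot_set oe S" using nd by blast
  then have ns: "\<not> ?X' \<subseteq> S" using y(2) quot_set_notsub by metis
  have "?X' \<subseteq> a_states G" using UR_states[OF wf_trans[OF wf] post_states[OF wf_trans[OF wf]]] .
  then show ?thesis unfolding RD_def using y ns C' UR_idem by metis
qed

lemma L2:
  assumes wf: "wf_aut G" and oe: "opaque_obs_equiv G S oe"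
    and b: "bisimulation (det (quot G oe)) b"
    and R: "RF G oe b C X"
    and tr: "(C, Ev \<sigma>, C') \<in> a_trans (H_b G oe b)"
  shows "\<sigma> \<in> a_alph G \<and> RF G oe b C' (UR G (post G X \<sigma>))"
proof -
  let ?D = "det (quot G oe)"
  let ?Xq = "quot_set oe X"
  let ?X' = "UR G (post G X \<sigma>)"
  have R': "X \<subseteq> a_states G" "UR G X = X" "?Xq \<in> a_states ?D" "C = b``{?Xq}"
    using R unfolding RF_def by auto
  have eq: "equiv (a_states ?D) b" using b unfolding bisimulation_def by blast
  from tr obtain X0 X0' where x0: "C = b``{X0}" "C' = b``{X0'}" "(X0, Ev \<sigma>, X0') \<in> a_trans ?D"
    unfolding H_b_def quot_sel by blast
  have X0s: "X0 \<in> a_states ?D"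
    using x0(3) detq_states[OF wf] unfolding det_trans by auto
  have "(X0, ?Xq) \<in> b" using eq x0(1) R'(3,4) X0s equiv_class_eq_iff[OF eq] by blast
  then obtain Y2 where y2: "(?Xq, Ev \<sigma>, Y2) \<in> a_trans ?D" "(Y2, X0') \<in> b"
    using b x0(3) unfolding bisimulation_def by blast
  from detq_trans_from[OF wf oe R'(1,2) y2(1)] have
    y: "\<sigma> \<in> a_alph G" "Y2 = quot_set oe ?X'" "?X' \<noteq> {}" "Y2 \<in> a_states ?D" by auto
  have C': "C' = b``{Y2}" using y2(2) x0(2) equiv_class_eq_iff[OF eq] by blast
  have "?X' \<subseteq> a_states G" using UR_states[OF wf_trans[OF wf] post_states[OF wf_trans[OF wf]]] .
  then show ?thesis unfolding RF_def using y C' UR_idem by metis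
qed

lemma init_RD:
  assumes wf: "wf_aut G" and oe: "opaque_obs_equiv G S oe"
    and ini: "\<not> UR G (a_init G) \<subseteq> S"
    and C: "C \<in> a_init (H_obd G S oe ob)"
  shows "RD G S oe ob C (UR G (a_init G))"
proof -
  have i: "a_init G \<subseteq> a_states G" using wf unfolding wf_aut_def by blast
  have q: "a_init (quot G oe) = quot_set oe (a_init G)" unfolding quot_sel quot_set_def by blast
  have "a_init (det (quot G oe)) = {quot_set oe (UR G (a_init G))}"
    unfolding det_init q UR_quot[OF wf oe i] ..
  moreover have "a_init (H_obd G S oe ob) \<subseteq> {ob``{x} | x. x \<in> a_init (det (quot G oe))}"
    unfolding H_obd_def desired_part_def H_ob_def by (simp only: reach_sel del_sel quot_sel) blast
  moreover note C
  ultimately obtain x where "C = ob``{x}" "x \<in> a_init (det (quot G oe))" "a_init (det (quot G oe)) = {quot_set oe (UR G (a_init G))}"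
    by blast
  then have C: "C = ob``{quot_set oe (UR G (a_init G))}" by simp
  have "quot_set oe (UR G (a_init G)) \<in> a_init (det_raw (quot G oe))"
    unfolding det_raw_sel q UR_quot[OF wf oe i] by simp
  then have "quot_set oe (UR G (a_init G)) \<in> reachable_set (det_raw (quot G oe))"
    by (rule reach_init)
  then have "quot_set oe (UR G (a_init G)) \<in> a_states (det (quot G oe))" using detq_states[OF wf] by simp
  moreover have "UR G (a_init G) \<subseteq> a_states G" using UR_states[OF wf_trans[OF wf] i] .
  moreover have "UR G (UR G (a_init G)) = UR G (a_init G)" by (rule UR_idem)
  moreover have "UR G (a_init G) \<noteq> {}" using ini by blast
  ultimately show ?thesis unfolding RD_def using C ini by (intro conjI) assumption+
qed

lemma init_RF:
  assumes wf: "wf_aut G" and oe: "opaque_obs_equiv G S oe"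
    and ini: "\<not> UR G (a_init G) \<subseteq> S"
    and C: "C \<in> a_init (H_b G oe b)"
  shows "RF G oe b C (UR G (a_init G))"
proof -
  have i: "a_init G \<subseteq> a_states G" using wf unfolding wf_aut_def by blast
  have q: "a_init (quot G oe) = quot_set oe (a_init G)" unfolding quot_sel quot_set_def by blast
  have "a_init (det (quot G oe)) = {quot_set oe (UR G (a_init G))}"
    unfolding det_init q UR_quot[OF wf oe i] ..
  moreover have "a_init (H_b G oe b) \<subseteq> {b``{x} | x. x \<in> a_init (det (quot G oe))}"
    unfolding H_b_def by (simp only: quot_sel subset_refl)
  moreover note C
  ultimately obtain x where "C = b``{x}" "x \<in> a_init (det (quot G oe))" "a_init (det (quot G oe)) = {quot_set oe (UR G (a_init G))}"
    by blast
  then have C: "C = b``{quot_set oe (UR G (a_init G))}" by simp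
  have "quot_set oe (UR G (a_init G)) \<in> a_init (det_raw (quot G oe))"
    unfolding det_raw_sel q UR_quot[OF wf oe i] by simp
  then have "quot_set oe (UR G (a_init G)) \<in> reachable_set (det_raw (quot G oe))"
    by (rule reach_init)
  then have "quot_set oe (UR G (a_init G)) \<in> a_states (det (quot G oe))" using detq_states[OF wf] by simp
  moreover have "UR G (a_init G) \<subseteq> a_states G" using UR_states[OF wf_trans[OF wf] i] .
  moreover have "UR G (a_init G) \<noteq> {}" using ini by blast
  moreover have "UR G (UR G (a_init G)) = UR G (a_init G)" by (rule UR_idem)
  ultimately show ?thesis unfolding RF_def using C by (intro conjI) assumption+
qed



lemma sync_sel[simp]:
  "a_alph (sync A1 A2) = a_alph A1 \<union> a_alph A2"
  "a_states (sync A1 A2) = a_states A1 \<times> a_states A2"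
  "a_init (sync A1 A2) = a_init A1 \<times> a_init A2"
  by (simp_all add: sync_def)

lemma sync_trans_iff:
  "(p, l, q) \<in> a_trans (sync A1 A2) \<longleftrightarrow>
     (\<exists>a. l = Ev a \<and> a \<in> a_alph A1 \<inter> a_alph A2 \<and> (fst p, Ev a, fst q) \<in> a_trans A1 \<and> (snd p, Ev a, snd q) \<in> a_trans A2)
   \<or> ((l = Tau \<or> (\<exists>a. l = Ev a \<and> a \<in> a_alph A1 - a_alph A2)) \<and> (fst p, l, fst q) \<in> a_trans A1 \<and> snd q = snd p \<and> snd p \<in> a_states A2)
   \<or> ((l = Tau \<or> (\<exists>a. l = Ev a \<and> a \<in> a_alph A2 - a_alph A1)) \<and> (snd p, l, snd q) \<in> a_trans A2 \<and> fst q = fst p \<and> fst p \<in> a_states A1)"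
  by (cases p; cases q; auto simp: sync_def)

lemma sync_tau1: "wtrans G1 x s y \<Longrightarrow> s = [] \<Longrightarrow> z \<in> a_states G2 \<Longrightarrow> wtrans (sync G1 G2) (x, z) [] (y, z)"
proof (induction rule: wtrans.induct)
  case (wt_refl p) show ?case by (rule wtrans.wt_refl)
next
  case (wt_tau p p' s q)
  have "((p, z), Tau, (p', z)) \<in> a_trans (sync G1 G2)" using wt_tau(1,5) unfolding sync_trans_iff by simp
  then show ?case using wt_tau by (blast intro: wtrans.intros)
next
  case (wt_ev p a p' s q) then show ?case by simp
qed

lemma sync_tau2: "wtrans G2 x s y \<Longrightarrow> s = [] \<Longrightarrow> z \<in> a_states G1 \<Longrightarrow> wtrans (sync G1 G2) (z, x) [] (z, y)"
proof (induction rule: wtrans.induct)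
  case (wt_refl p) show ?case by (rule wtrans.wt_refl)
next
  case (wt_tau p p' s q)
  have "((z, p), Tau, (z, p')) \<in> a_trans (sync G1 G2)" using wt_tau(1,5) unfolding sync_trans_iff by simp
  then show ?case using wt_tau by (blast intro: wtrans.intros)
next
  case (wt_ev p a p' s q) then show ?case by simp
qed

lemma sync_tau_down:
  assumes wf1: "wf_aut G1" and wf2: "wf_aut G2"
  shows "wtrans (sync G1 G2) p s q \<Longrightarrow> s = [] \<Longrightarrow> fst p \<in> a_states G1 \<Longrightarrow> snd p \<in> a_states G2
     \<Longrightarrow> wtrans G1 (fst p) [] (fst q) \<and> wtrans G2 (snd p) [] (snd q)"
proof (induction rule: wtrans.induct)
  case (wt_refl p) then show ?case by (auto intro: wtrans.intros)
next
  case (wt_tau p p' s q)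
  from wt_tau(1) have c: "((fst p, Tau, fst p') \<in> a_trans G1 \<and> snd p' = snd p) \<or>
      ((snd p, Tau, snd p') \<in> a_trans G2 \<and> fst p' = fst p)"
    unfolding sync_trans_iff by auto
  have st: "fst p' \<in> a_states G1" "snd p' \<in> a_states G2"
    using c wt_tau(5,6) wf_trans[OF wf1] wf_trans[OF wf2] by auto
  from wt_tau.IH[OF wt_tau(4) st] c show ?case by (auto intro: wtrans.intros)
next
  case (wt_ev p a p' s q) then show ?case by simp
qed

lemma UR_sync:
  assumes wf1: "wf_aut G1" and wf2: "wf_aut G2" and A: "A \<subseteq> a_states G1" and B: "B \<subseteq> a_states G2"
  shows "UR (sync G1 G2) (A \<times> B) = UR G1 A \<times> UR G2 B"
proof
  show "UR (sync G1 G2) (A \<times> B) \<subseteq> UR G1 A \<times> UR G2 B"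
  proof
    fix q assume "q \<in> UR (sync G1 G2) (A \<times> B)"
    then obtain a b where ab: "a \<in> A" "b \<in> B" "wtrans (sync G1 G2) (a, b) [] q" unfolding UR_def by blast
    have "a \<in> a_states G1" "b \<in> a_states G2" using ab A B by auto
    from sync_tau_down[OF wf1 wf2 ab(3) refl] this
    have "wtrans G1 a [] (fst q)" "wtrans G2 b [] (snd q)" by auto
    then show "q \<in> UR G1 A \<times> UR G2 B" using ab unfolding UR_def by (cases q) auto
  qed
next
  show "UR G1 A \<times> UR G2 B \<subseteq> UR (sync G1 G2) (A \<times> B)"
  proof
    fix q assume "q \<in> UR G1 A \<times> UR G2 B"
    then obtain a b y z where ab: "q = (y, z)" "a \<in> A" "b \<in> B" "wtrans G1 a [] y" "wtrans G2 b [] z"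
      unfolding UR_def by blast
    have bs: "b \<in> a_states G2" using ab B by auto
    have ys: "y \<in> a_states G1" using wtrans_states[OF ab(4) wf_trans[OF wf1]] ab(2) A by auto
    have "wtrans (sync G1 G2) (a, b) [] (y, b)" using sync_tau1[OF ab(4) refl bs] .
    moreover have "wtrans (sync G1 G2) (y, b) [] (y, z)" using sync_tau2[OF ab(5) refl ys] .
    ultimately have "wtrans (sync G1 G2) (a, b) [] (y, z)" using wtrans_app by fastforce
    then show "q \<in> UR (sync G1 G2) (A \<times> B)" using ab unfolding UR_def by blast
  qed
qed

definition stp :: "('q, 'e) aut \<Rightarrow> 'q set \<Rightarrow> 'e \<Rightarrow> 'q set" where
  "stp G X \<sigma> = (if \<sigma> \<in> a_alph G then UR G (post G X \<sigma>) else X)"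

lemma post_sync:
  assumes A: "A \<subseteq> a_states G1" and B: "B \<subseteq> a_states G2" and s: "\<sigma> \<in> a_alph G1 \<union> a_alph G2"
  shows "post (sync G1 G2) (A \<times> B) \<sigma> =
     (if \<sigma> \<in> a_alph G1 then post G1 A \<sigma> else A) \<times> (if \<sigma> \<in> a_alph G2 then post G2 B \<sigma> else B)"
  using A B s unfolding post_def sync_trans_iff by (auto split: if_splits)

lemma global_step:
  assumes wf1: "wf_aut G1" and wf2: "wf_aut G2" and A: "A \<subseteq> a_states G1" "UR G1 A = A"
    and B: "B \<subseteq> a_states G2" "UR G2 B = B" and s: "\<sigma> \<in> a_alph G1 \<union> a_alph G2"
  shows "UR (sync G1 G2) (post (sync G1 G2) (A \<times> B) \<sigma>) = stp G1 A \<sigma> \<times> stp G2 B \<sigma>"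
proof -
  have p1: "(if \<sigma> \<in> a_alph G1 then post G1 A \<sigma> else A) \<subseteq> a_states G1"
    using A post_states[OF wf_trans[OF wf1]] by auto
  have p2: "(if \<sigma> \<in> a_alph G2 then post G2 B \<sigma> else B) \<subseteq> a_states G2"
    using B post_states[OF wf_trans[OF wf2]] by auto
  show ?thesis unfolding post_sync[OF A(1) B(1) s] UR_sync[OF wf1 wf2 p1 p2] stp_def
    using A(2) B(2) by auto
qed

lemma stp_props:
  assumes wf: "wf_aut G" and "X \<subseteq> a_states G" "UR G X = X"
  shows "stp G X \<sigma> \<subseteq> a_states G" "UR G (stp G X \<sigma>) = stp G X \<sigma>"
  using assms UR_states[OF wf_trans[OF wf] post_states[OF wf_trans[OF wf]]]
  unfolding stp_def by (auto simp: UR_idem)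

lemma det_d_trans:
  "(p, l, q) \<in> a_trans (det_d G S) \<longleftrightarrow>
    (p, l, q) \<in> a_trans (det G) \<and> \<not> p \<subseteq> S \<and> \<not> q \<subseteq> S \<and> p \<in> reachable_set (delete_states (det G) (\<lambda>X. X \<subseteq> S))"
  unfolding det_d_def desired_part_def by simp

lemma prod_notsub: "\<not> X1 \<subseteq> S1 \<Longrightarrow> \<not> X2 \<subseteq> S2 \<Longrightarrow> \<not> X1 \<times> X2 \<subseteq> sync_secret S1 S2"
  unfolding sync_secret_def by blast

lemma GD_step:
  assumes r: "X1 \<times> X2 \<in> reachable_set (delete_states (det (sync G1 G2)) (\<lambda>X. X \<subseteq> sync_secret S1 S2))"
    and n: "\<not> X1 \<subseteq> S1" "\<not> X2 \<subseteq> S2" "\<not> Y1 \<subseteq> S1" "\<not> Y2 \<subseteq> S2"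
    and s: "\<sigma> \<in> a_alph G1 \<union> a_alph G2"
    and e: "UR (sync G1 G2) (post (sync G1 G2) (X1 \<times> X2) \<sigma>) = Y1 \<times> Y2"
  shows "(X1 \<times> X2, Ev \<sigma>, Y1 \<times> Y2) \<in> a_trans (det_d (sync G1 G2) (sync_secret S1 S2))
     \<and> Y1 \<times> Y2 \<in> reachable_set (delete_states (det (sync G1 G2)) (\<lambda>X. X \<subseteq> sync_secret S1 S2))"
proof -
  have r0: "X1 \<times> X2 \<in> reachable_set (det_raw (sync G1 G2))"
    using subsetD[OF reachable_delete r] det_reach by blast
  have ne: "Y1 \<times> Y2 \<noteq> {}" using n(3,4) by blast
  have t: "(X1 \<times> X2, Ev \<sigma>, Y1 \<times> Y2) \<in> a_trans (det (sync G1 G2))"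
    unfolding det_trans using r0 s e ne by auto
  have t2: "(X1 \<times> X2, Ev \<sigma>, Y1 \<times> Y2) \<in> a_trans (delete_states (det (sync G1 G2)) (\<lambda>X. X \<subseteq> sync_secret S1 S2))"
    using t prod_notsub[OF n(1,2)] prod_notsub[OF n(3,4)] by simp
  have "(X1 \<times> X2, Ev \<sigma>, Y1 \<times> Y2) \<in> a_trans (det_d (sync G1 G2) (sync_secret S1 S2))"
    unfolding det_d_trans using t prod_notsub[OF n(1,2)] prod_notsub[OF n(3,4)] r by blast
  moreover have "Y1 \<times> Y2 \<in> reachable_set (delete_states (det (sync G1 G2)) (\<lambda>X. X \<subseteq> sync_secret S1 S2))"
    by (rule reach_step[OF r t2])
  ultimately show ?thesis by (rule conjI)
qed

lemma GF_step:
  assumes r: "F \<in> reachable_set (det_raw G)" and s: "\<sigma> \<in> a_alph G"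
    and ne: "UR G (post G F \<sigma>) \<noteq> {}"
  shows "(F, Ev \<sigma>, UR G (post G F \<sigma>)) \<in> a_trans (det G) \<and> UR G (post G F \<sigma>) \<in> reachable_set (det_raw G)"
proof -
  have "(F, Ev \<sigma>, UR G (post G F \<sigma>)) \<in> a_trans (det_raw G)" using s ne by simp
  then have "UR G (post G F \<sigma>) \<in> reachable_set (det_raw G)" by (rule reach_step[OF r])
  moreover have "(F, Ev \<sigma>, UR G (post G F \<sigma>)) \<in> a_trans (det G)" unfolding det_trans using r s ne by blast
  ultimately show ?thesis by blast
qed



definition TPO_raw :: "('d, 'e) aut \<Rightarrow> ('f, 'e) aut \<Rightarrow> (('d, 'f, 'e) tstate, 'e tlab) aut" where
  "TPO_raw D F = \<lparr> a_alph = TEv ` a_alph D \<union> {tlab.Eps} \<union> Erase ` a_alph D,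
       a_states = UNIV,
       a_trans = tpo_trans D F,
       a_init = {Y d0 f0 | d0 f0. d0 \<in> a_init D \<and> f0 \<in> a_init F},
       a_marked = {} \<rparr>"

lemma TPO_eq: "TPO D F = reach_part (TPO_raw D F)"
  unfolding TPO_def TPO_raw_def ..

lemma TPO_raw_sel[simp]:
  "a_trans (TPO_raw D F) = tpo_trans D F"
  "a_init (TPO_raw D F) = {Y d0 f0 | d0 f0. d0 \<in> a_init D \<and> f0 \<in> a_init F}"
  "a_states (TPO_raw D F) = UNIV"
  by (simp_all add: TPO_raw_def)

lemma TPO_trans: "(p, l, q) \<in> a_trans (TPO D F) \<longleftrightarrow> (p, l, q) \<in> tpo_trans D F \<and> p \<in> reachable_set (TPO_raw D F)"
  unfolding TPO_eq by simp

lemma TPO_states: "a_states (TPO D F) = reachable_set (TPO_raw D F)"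
  unfolding TPO_eq by simp

lemma TPO_init: "a_init (TPO D F) = {Y d0 f0 | d0 f0. d0 \<in> a_init D \<and> f0 \<in> a_init F}"
  unfolding TPO_eq by simp

lemma tpo_Y: "(Y d f, l, q) \<in> tpo_trans D F \<longleftrightarrow> (\<exists>e. l = Ev (TEv e) \<and> defined_at F e f \<and> q = Z d f e)"
  unfolding tpo_trans_def by auto

lemma tpo_Z: "(Z d f e, l, q) \<in> tpo_trans D F \<longleftrightarrow>
   (\<exists>\<theta> d'. l = Ev (TEv \<theta>) \<and> (d, Ev \<theta>, d') \<in> a_trans D \<and> q = Z d' f e)
   \<or> (l = Ev tlab.Eps \<and> defined_at D e d \<and> defined_at F e f \<and> q = W d f (TEv e))
   \<or> (l = Ev (Erase e) \<and> defined_at F e f \<and> q = W d f (Erase e))"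
  unfolding tpo_trans_def by auto

lemma tpo_W: "(W d f a, l, q) \<in> tpo_trans D F \<longleftrightarrow>
   (\<exists>e d' f'. a = TEv e \<and> l = Ev (TEv e) \<and> (d, Ev e, d') \<in> a_trans D \<and> (f, Ev e, f') \<in> a_trans F \<and> q = Y d' f')
   \<or> (\<exists>e f'. a = Erase e \<and> l = Ev (TEv e) \<and> (f, Ev e, f') \<in> a_trans F \<and> q = Y d f')"
  unfolding tpo_trans_def by auto

lemma tt_sel[simp]:
  "a_states (transformed T Si Sj) = a_states T"
  "a_init (transformed T Si Sj) = a_init T"
  by (simp_all add: transformed_def)

lemma tt_trans_def':
  "a_trans (transformed T Si Sj) =
         {(Y d f, Ev (XEv e), q) | d f e q. (Y d f, Ev (TEv e), q) \<in> a_trans T}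
       \<union> {(Z d f e, Ev (Theta \<theta> e), q) | d f e \<theta> q. (Z d f e, Ev \<theta>, q) \<in> a_trans T}
       \<union> {(W d f a, Ev (SigW \<sigma> a), q) | d f a \<sigma> q. (W d f a, Ev (TEv \<sigma>), q) \<in> a_trans T}
       \<union> {(Y d f, Ev (XEv \<alpha>), Y d f) | d f \<alpha>. Y d f \<in> a_states T \<and> \<alpha> \<in> Sj - Si}"
  by (simp add: transformed_def)

lemma tt_Y: "(Y d f, Ev x, q) \<in> a_trans (transformed T Si Sj) \<Longrightarrow>
   (\<exists>e. x = XEv e \<and> (Y d f, Ev (TEv e), q) \<in> a_trans T) \<or> (\<exists>\<alpha>. x = XEv \<alpha> \<and> \<alpha> \<in> Sj - Si \<and> q = Y d f)"
  unfolding tt_trans_def' by blast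

lemma tt_Z: "(Z d f e, Ev x, q) \<in> a_trans (transformed T Si Sj) \<Longrightarrow>
   (\<exists>\<theta>. x = Theta \<theta> e \<and> (Z d f e, Ev \<theta>, q) \<in> a_trans T)"
  unfolding tt_trans_def' by blast

lemma tt_W: "(W d f a, Ev x, q) \<in> a_trans (transformed T Si Sj) \<Longrightarrow>
   (\<exists>\<sigma>. x = SigW \<sigma> a \<and> (W d f a, Ev (TEv \<sigma>), q) \<in> a_trans T)"
  unfolding tt_trans_def' by blast

lemma tt_alph_def':
  "a_alph (transformed T Si Sj) = XEv ` Si \<union> XEv ` (Sj - Si)
        \<union> {Theta \<theta> e | \<theta> e. \<theta> \<in> TEv ` Si \<union> {tlab.Eps} \<union> Erase ` Si \<and> e \<in> obs_comps T}
        \<union> {SigW \<sigma> a | \<sigma> a. \<sigma> \<in> Si \<and> a \<in> act_comps T}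
        \<union> {x. \<exists>\<beta> \<alpha>. \<beta> \<in> Si \<inter> Sj \<and> \<alpha> \<in> Sj - Si \<and>
               (x = Theta (TEv \<beta>) \<alpha> \<or> x = SigW \<beta> (TEv \<alpha>) \<or> x = SigW \<beta> (Erase \<alpha>))}"
  by (simp add: transformed_def)

lemma A1: "e \<in> Si \<union> Sj \<Longrightarrow> XEv e \<in> a_alph (transformed T Si Sj)"
  unfolding tt_alph_def' by blast

lemma A2: "Z d f e \<in> a_states T \<Longrightarrow> \<theta> \<in> TEv ` Si \<union> {tlab.Eps} \<union> Erase ` Si
   \<Longrightarrow> Theta \<theta> e \<in> a_alph (transformed T Si Sj)"
  unfolding tt_alph_def' obs_comps_def by blast

lemma A3: "\<beta> \<in> Si \<Longrightarrow> \<beta> \<in> Sj \<Longrightarrow> \<alpha> \<in> Sj \<Longrightarrow> \<alpha> \<notin> Si \<Longrightarrow> Theta (TEv \<beta>) \<alpha> \<in> a_alph (transformed T Si Sj)"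
  unfolding tt_alph_def' by blast

lemma A4: "W d f a \<in> a_states T \<Longrightarrow> \<sigma> \<in> Si \<Longrightarrow> SigW \<sigma> a \<in> a_alph (transformed T Si Sj)"
  unfolding tt_alph_def' act_comps_def by blast



lemma CY:
  assumes wf: "wf_aut G" and oe: "opaque_obs_equiv G S oe" and b: "bisimulation (det (quot G oe)) b"
    and R: "RF G oe b f F"
    and tr: "(Y d f, Ev (XEv e), q') \<in> a_trans (transformed (local_TPO G S oe ob b) (a_alph G) Sj)"
  shows "(e \<in> a_alph G \<and> q' = Z d f e \<and> UR G (post G F e) \<noteq> {}) \<or> (e \<in> Sj \<and> e \<notin> a_alph G \<and> q' = Y d f)"
proof -
  from tt_Y[OF tr] show ?thesis
  proof
    assume "\<exists>e'. XEv e = XEv e' \<and> (Y d f, Ev (TEv e'), q') \<in> a_trans (local_TPO G S oe ob b)"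
    then have "(Y d f, Ev (TEv e), q') \<in> tpo_trans (H_obd G S oe ob) (H_b G oe b)"
      unfolding local_TPO_def TPO_trans by auto
    then have "defined_at (H_b G oe b) e f" "q' = Z d f e" unfolding tpo_Y by auto
    then obtain f' where "(f, Ev e, f') \<in> a_trans (H_b G oe b)" unfolding defined_at_def by blast
    from L2[OF wf oe b R this] have "e \<in> a_alph G" "UR G (post G F e) \<noteq> {}" unfolding RF_def by auto
    then show ?thesis using \<open>q' = Z d f e\<close> by blast
  next
    assume "\<exists>\<alpha>. XEv e = XEv \<alpha> \<and> \<alpha> \<in> Sj - a_alph G \<and> q' = Y d f"
    then show ?thesis by auto
  qed
qed

lemma CZ:
  assumes wf: "wf_aut G" and oe: "opaque_obs_equiv G S oe"
    and ob: "opaque_bisim (det (quot G oe)) (quot_set oe S) ob"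
    and b: "bisimulation (det (quot G oe)) b"
    and RDd: "RD G S oe ob d X" and RFf: "RF G oe b f F"
    and tr: "(Z d f e, Ev x, q') \<in> a_trans (transformed (local_TPO G S oe ob b) (a_alph G) Sj)"
  shows "(\<exists>\<theta> d'. x = Theta (TEv \<theta>) e \<and> \<theta> \<in> a_alph G \<and> q' = Z d' f e \<and> RD G S oe ob d' (UR G (post G X \<theta>)))
    \<or> (x = Theta tlab.Eps e \<and> e \<in> a_alph G \<and> q' = W d f (TEv e)
        \<and> (\<exists>d'. RD G S oe ob d' (UR G (post G X e))) \<and> (\<exists>f'. RF G oe b f' (UR G (post G F e))))
    \<or> (x = Theta (Erase e) e \<and> e \<in> a_alph G \<and> q' = W d f (Erase e) \<and> (\<exists>f'. RF G oe b f' (UR G (post G F e))))"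
proof -
  from tt_Z[OF tr] obtain \<theta> where th: "x = Theta \<theta> e" "(Z d f e, Ev \<theta>, q') \<in> a_trans (local_TPO G S oe ob b)"
    by blast
  then have "(Z d f e, Ev \<theta>, q') \<in> tpo_trans (H_obd G S oe ob) (H_b G oe b)"
    unfolding local_TPO_def TPO_trans by auto
  then have c: "(\<exists>\<theta>' d'. \<theta> = TEv \<theta>' \<and> (d, Ev \<theta>', d') \<in> a_trans (H_obd G S oe ob) \<and> q' = Z d' f e)
   \<or> (\<theta> = tlab.Eps \<and> defined_at (H_obd G S oe ob) e d \<and> defined_at (H_b G oe b) e f \<and> q' = W d f (TEv e))
   \<or> (\<theta> = Erase e \<and> defined_at (H_b G oe b) e f \<and> q' = W d f (Erase e))"
    unfolding tpo_Z by auto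
  show ?thesis
  proof (rule disjE[OF c])
    assume "\<exists>\<theta>' d'. \<theta> = TEv \<theta>' \<and> (d, Ev \<theta>', d') \<in> a_trans (H_obd G S oe ob) \<and> q' = Z d' f e"
    then obtain \<theta>' d' where a: "\<theta> = TEv \<theta>'" "(d, Ev \<theta>', d') \<in> a_trans (H_obd G S oe ob)" "q' = Z d' f e"
      by blast
    from L1[OF wf oe ob RDd a(2)] a th(1) show ?thesis by blast
  next
    assume "(\<theta> = tlab.Eps \<and> defined_at (H_obd G S oe ob) e d \<and> defined_at (H_b G oe b) e f \<and> q' = W d f (TEv e))
   \<or> (\<theta> = Erase e \<and> defined_at (H_b G oe b) e f \<and> q' = W d f (Erase e))"
    then show ?thesis
    proof
      assume a: "\<theta> = tlab.Eps \<and> defined_at (H_obd G S oe ob) e d \<and> defined_at (H_b G oe b) e f \<and> q' = W d f (TEv e)"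
      then obtain d' f' where t: "(d, Ev e, d') \<in> a_trans (H_obd G S oe ob)" "(f, Ev e, f') \<in> a_trans (H_b G oe b)"
        unfolding defined_at_def by blast
      from L1[OF wf oe ob RDd t(1)] L2[OF wf oe b RFf t(2)] a th(1) show ?thesis by blast
    next
      assume a: "\<theta> = Erase e \<and> defined_at (H_b G oe b) e f \<and> q' = W d f (Erase e)"
      then obtain f' where t: "(f, Ev e, f') \<in> a_trans (H_b G oe b)"
        unfolding defined_at_def by blast
      from L2[OF wf oe b RFf t] a th(1) show ?thesis by blast
    qed
  qed
qed

lemma CW:
  assumes wf: "wf_aut G" and oe: "opaque_obs_equiv G S oe"
    and ob: "opaque_bisim (det (quot G oe)) (quot_set oe S) ob"
    and b: "bisimulation (det (quot G oe)) b"
    and RDd: "RD G S oe ob d X" and RFf: "RF G oe b f F"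
    and tr: "(W d f a, Ev x, q') \<in> a_trans (transformed (local_TPO G S oe ob b) (a_alph G) Sj)"
  shows "(\<exists>e d' f'. a = TEv e \<and> x = SigW e a \<and> e \<in> a_alph G \<and> q' = Y d' f'
            \<and> RD G S oe ob d' (UR G (post G X e)) \<and> RF G oe b f' (UR G (post G F e)))
    \<or> (\<exists>e f'. a = Erase e \<and> x = SigW e a \<and> e \<in> a_alph G \<and> q' = Y d f' \<and> RF G oe b f' (UR G (post G F e)))"
proof -
  from tt_W[OF tr] obtain \<sigma> where s: "x = SigW \<sigma> a" "(W d f a, Ev (TEv \<sigma>), q') \<in> a_trans (local_TPO G S oe ob b)"
    by blast
  then have "(W d f a, Ev (TEv \<sigma>), q') \<in> tpo_trans (H_obd G S oe ob) (H_b G oe b)"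
    unfolding local_TPO_def TPO_trans by auto
  then have c: "(\<exists>e d' f'. a = TEv e \<and> TEv \<sigma> = TEv e \<and> (d, Ev e, d') \<in> a_trans (H_obd G S oe ob) \<and> (f, Ev e, f') \<in> a_trans (H_b G oe b) \<and> q' = Y d' f')
   \<or> (\<exists>e f'. a = Erase e \<and> TEv \<sigma> = TEv e \<and> (f, Ev e, f') \<in> a_trans (H_b G oe b) \<and> q' = Y d f')"
    unfolding tpo_W by blast
  show ?thesis
  proof (rule disjE[OF c])
    assume "\<exists>e d' f'. a = TEv e \<and> TEv \<sigma> = TEv e \<and> (d, Ev e, d') \<in> a_trans (H_obd G S oe ob) \<and> (f, Ev e, f') \<in> a_trans (H_b G oe b) \<and> q' = Y d' f'"
    then obtain e d' f' where a: "a = TEv e" "\<sigma> = e" "(d, Ev e, d') \<in> a_trans (H_obd G S oe ob)"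
      "(f, Ev e, f') \<in> a_trans (H_b G oe b)" "q' = Y d' f'" by blast
    from L1[OF wf oe ob RDd a(3)] L2[OF wf oe b RFf a(4)] a s(1) show ?thesis by blast
  next
    assume "\<exists>e f'. a = Erase e \<and> TEv \<sigma> = TEv e \<and> (f, Ev e, f') \<in> a_trans (H_b G oe b) \<and> q' = Y d f'"
    then obtain e f' where a: "a = Erase e" "\<sigma> = e" "(f, Ev e, f') \<in> a_trans (H_b G oe b)" "q' = Y d f'" by blast
    from L2[OF wf oe b RFf a(3)] a s(1) show ?thesis by blast
  qed
qed



fun gD :: "('d, 'f, 'e) tstate \<Rightarrow> 'd" where
  "gD (Y d f) = d" | "gD (Z d f e) = d" | "gD (W d f a) = d"

fun gF :: "('d, 'f, 'e) tstate \<Rightarrow> 'f" where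
  "gF (Y d f) = f" | "gF (Z d f e) = f" | "gF (W d f a) = f"

fun lst :: "'e set \<Rightarrow> 'a \<Rightarrow> 'b \<Rightarrow> ('d, 'f, 'e) tstate \<Rightarrow> ('a, 'b, 'e) tstate" where
  "lst U dd ff (Y d f) = Y dd ff"
| "lst U dd ff (Z d f e) = (if e \<in> U then Z dd ff e else Y dd ff)"
| "lst U dd ff (W d f (TEv e)) = (if e \<in> U then W dd ff (TEv e) else Y dd ff)"
| "lst U dd ff (W d f (Erase e)) = (if e \<in> U then W dd ff (Erase e) else Y dd ff)"
| "lst U dd ff (W d f tlab.Eps) = Y dd ff"

fun good :: "'e set \<Rightarrow> ('d, 'f, 'e) tstate \<Rightarrow> bool" where
  "good U (Y d f) = True"
| "good U (Z d f e) = (e \<in> U)"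
| "good U (W d f (TEv e)) = (e \<in> U)"
| "good U (W d f (Erase e)) = (e \<in> U)"
| "good U (W d f tlab.Eps) = False"

lemma sync_dec:
  "((q1, q2), Ev x, (q1', q2')) \<in> a_trans (sync A1 A2) \<Longrightarrow>
    (x \<in> a_alph A1 \<and> x \<in> a_alph A2 \<and> (q1, Ev x, q1') \<in> a_trans A1 \<and> (q2, Ev x, q2') \<in> a_trans A2)
  \<or> (x \<in> a_alph A1 \<and> x \<notin> a_alph A2 \<and> (q1, Ev x, q1') \<in> a_trans A1 \<and> q2' = q2 \<and> q2 \<in> a_states A2)
  \<or> (x \<notin> a_alph A1 \<and> x \<in> a_alph A2 \<and> (q2, Ev x, q2') \<in> a_trans A2 \<and> q1' = q1 \<and> q1 \<in> a_states A1)"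
  unfolding sync_trans_iff by auto

lemma TG_step:
  "t \<in> reachable_set (TPO_raw D F) \<Longrightarrow> (t, l, t') \<in> tpo_trans D F \<Longrightarrow>
    (t, l, t') \<in> a_trans (TPO D F) \<and> t' \<in> reachable_set (TPO_raw D F)"
  by (simp add: TPO_trans reach_step[of t "TPO_raw D F" l t'])

locale cfg =
  fixes G1 :: "('q1, 'e) aut" and G2 :: "('q2, 'e) aut"
    and S1 :: "'q1 set" and S2 :: "'q2 set"
    and oe1 :: "('q1 \<times> 'q1) set" and oe2 :: "('q2 \<times> 'q2) set"
    and ob1 b1 :: "('q1 set set \<times> 'q1 set set) set"
    and ob2 b2 :: "('q2 set set \<times> 'q2 set set) set"
  assumes wf1: "wf_aut G1" and wf2: "wf_aut G2"
    and init1: "\<not> UR G1 (a_init G1) \<subseteq> S1" and init2: "\<not> UR G2 (a_init G2) \<subseteq> S2"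
    and oe1: "opaque_obs_equiv G1 S1 oe1" and oe2: "opaque_obs_equiv G2 S2 oe2"
    and ob1: "opaque_bisim (det (quot G1 oe1)) (quot_set oe1 S1) ob1"
    and ob2: "opaque_bisim (det (quot G2 oe2)) (quot_set oe2 S2) ob2"
    and b1: "bisimulation (det (quot G1 oe1)) b1"
    and b2: "bisimulation (det (quot G2 oe2)) b2"
begin

abbreviation "TT1 \<equiv> transformed (local_TPO G1 S1 oe1 ob1 b1) (a_alph G1) (a_alph G2)"
abbreviation "TT2 \<equiv> transformed (local_TPO G2 S2 oe2 ob2 b2) (a_alph G2) (a_alph G1)"
abbreviation "DG \<equiv> det_d (sync G1 G2) (sync_secret S1 S2)"
abbreviation "FG \<equiv> det (sync G1 G2)"
abbreviation "PS \<equiv> (\<lambda>X. X \<subseteq> sync_secret S1 S2)"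

definition INV where
  "INV q t \<longleftrightarrow> (\<exists>d1 f1 d2 f2 X1 X2 F1 F2.
     RD G1 S1 oe1 ob1 d1 X1 \<and> RF G1 oe1 b1 f1 F1 \<and> RD G2 S2 oe2 ob2 d2 X2 \<and> RF G2 oe2 b2 f2 F2
   \<and> gD t = X1 \<times> X2 \<and> gF t = F1 \<times> F2 \<and> q = (lst (a_alph G1) d1 f1 t, lst (a_alph G2) d2 f2 t)
   \<and> t \<in> reachable_set (TPO_raw DG FG)
   \<and> X1 \<times> X2 \<in> reachable_set (delete_states FG PS)
   \<and> F1 \<times> F2 \<in> reachable_set (det_raw (sync G1 G2))
   \<and> good (a_alph G1 \<union> a_alph G2) t)"

lemma RF_ne: "RF G oe b f F \<Longrightarrow> F \<noteq> {}" unfolding RF_def by blast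
lemma RD_ne: "RD G S oe ob f F \<Longrightarrow> F \<noteq> {} \<and> \<not> F \<subseteq> S" unfolding RD_def by blast
lemma RF_cl: "RF G oe b f F \<Longrightarrow> F \<subseteq> a_states G \<and> UR G F = F" unfolding RF_def by blast
lemma RD_cl: "RD G S oe ob f F \<Longrightarrow> F \<subseteq> a_states G \<and> UR G F = F" unfolding RD_def by blast

lemma FG_defined:
  assumes R1: "RF G1 oe1 b1 f1 F1" and R2: "RF G2 oe2 b2 f2 F2"
    and r: "F1 \<times> F2 \<in> reachable_set (det_raw (sync G1 G2))"
    and s: "e \<in> a_alph G1 \<union> a_alph G2"
    and n1: "e \<in> a_alph G1 \<Longrightarrow> UR G1 (post G1 F1 e) \<noteq> {}"
    and n2: "e \<in> a_alph G2 \<Longrightarrow> UR G2 (post G2 F2 e) \<noteq> {}"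
  shows "(F1 \<times> F2, Ev e, stp G1 F1 e \<times> stp G2 F2 e) \<in> a_trans FG
     \<and> stp G1 F1 e \<times> stp G2 F2 e \<in> reachable_set (det_raw (sync G1 G2))"
proof -
  have c1: "F1 \<subseteq> a_states G1" "UR G1 F1 = F1" using RF_cl[OF R1] by auto
  have c2: "F2 \<subseteq> a_states G2" "UR G2 F2 = F2" using RF_cl[OF R2] by auto
  have eq: "UR (sync G1 G2) (post (sync G1 G2) (F1 \<times> F2) e) = stp G1 F1 e \<times> stp G2 F2 e"
    using global_step[OF wf1 wf2 c1 c2 s] .
  have "stp G1 F1 e \<noteq> {}" using n1 RF_ne[OF R1] unfolding stp_def by auto
  moreover have "stp G2 F2 e \<noteq> {}" using n2 RF_ne[OF R2] unfolding stp_def by auto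
  ultimately have ne: "UR (sync G1 G2) (post (sync G1 G2) (F1 \<times> F2) e) \<noteq> {}" using eq by simp
  have s': "e \<in> a_alph (sync G1 G2)" using s by simp
  show ?thesis using GF_step[OF r s' ne] eq by simp
qed

lemma DG_step:
  assumes R1: "RD G1 S1 oe1 ob1 d1 X1" and R2: "RD G2 S2 oe2 ob2 d2 X2"
    and r: "X1 \<times> X2 \<in> reachable_set (delete_states FG PS)"
    and s: "e \<in> a_alph G1 \<union> a_alph G2"
    and n1: "e \<in> a_alph G1 \<Longrightarrow> \<exists>d. RD G1 S1 oe1 ob1 d (UR G1 (post G1 X1 e))"
    and n2: "e \<in> a_alph G2 \<Longrightarrow> \<exists>d. RD G2 S2 oe2 ob2 d (UR G2 (post G2 X2 e))"
  shows "(X1 \<times> X2, Ev e, stp G1 X1 e \<times> stp G2 X2 e) \<in> a_trans DG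
     \<and> stp G1 X1 e \<times> stp G2 X2 e \<in> reachable_set (delete_states FG PS)"
proof -
  have c1: "X1 \<subseteq> a_states G1" "UR G1 X1 = X1" using RD_cl[OF R1] by auto
  have c2: "X2 \<subseteq> a_states G2" "UR G2 X2 = X2" using RD_cl[OF R2] by auto
  have eq: "UR (sync G1 G2) (post (sync G1 G2) (X1 \<times> X2) e) = stp G1 X1 e \<times> stp G2 X2 e"
    using global_step[OF wf1 wf2 c1 c2 s] .
  have "\<not> stp G1 X1 e \<subseteq> S1"
  proof (cases "e \<in> a_alph G1")
    case True then obtain d where "RD G1 S1 oe1 ob1 d (UR G1 (post G1 X1 e))" using n1 by blast
    from RD_ne[OF this] True show ?thesis unfolding stp_def by simp
  next
    case False then show ?thesis using RD_ne[OF R1] unfolding stp_def by simp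
  qed
  moreover have "\<not> stp G2 X2 e \<subseteq> S2"
  proof (cases "e \<in> a_alph G2")
    case True then obtain d where "RD G2 S2 oe2 ob2 d (UR G2 (post G2 X2 e))" using n2 by blast
    from RD_ne[OF this] True show ?thesis unfolding stp_def by simp
  next
    case False then show ?thesis using RD_ne[OF R2] unfolding stp_def by simp
  qed
  ultimately show ?thesis
    using GD_step[OF r RD_ne[OF R1, THEN conjunct2] RD_ne[OF R2, THEN conjunct2] _ _ s eq] by blast
qed

end


context cfg begin

lemma INV_E:
  assumes "INV q t"
  obtains d1 X1 f1 F1 d2 X2 f2 F2 where
     "RD G1 S1 oe1 ob1 d1 X1" "RF G1 oe1 b1 f1 F1" "RD G2 S2 oe2 ob2 d2 X2" "RF G2 oe2 b2 f2 F2"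
     "gD t = X1 \<times> X2" "gF t = F1 \<times> F2" "q = (lst (a_alph G1) d1 f1 t, lst (a_alph G2) d2 f2 t)"
     "t \<in> reachable_set (TPO_raw DG FG)"
     "X1 \<times> X2 \<in> reachable_set (delete_states FG PS)"
     "F1 \<times> F2 \<in> reachable_set (det_raw (sync G1 G2))"
     "good (a_alph G1 \<union> a_alph G2) t"
  using assms unfolding INV_def by blast

lemma INV_I:
  assumes "RD G1 S1 oe1 ob1 d1 X1" "RF G1 oe1 b1 f1 F1" "RD G2 S2 oe2 ob2 d2 X2" "RF G2 oe2 b2 f2 F2"
     "gD t = X1 \<times> X2" "gF t = F1 \<times> F2" "q = (lst (a_alph G1) d1 f1 t, lst (a_alph G2) d2 f2 t)"
     "t \<in> reachable_set (TPO_raw DG FG)"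
     "X1 \<times> X2 \<in> reachable_set (delete_states FG PS)"
     "F1 \<times> F2 \<in> reachable_set (det_raw (sync G1 G2))"
     "good (a_alph G1 \<union> a_alph G2) t"
  shows "INV q t"
  unfolding INV_def using assms by blast

lemma stepY:
  assumes I: "INV (q1, q2) (Y d f)"
    and tr: "((q1, q2), Ev x, (q1', q2')) \<in> a_trans (sync TT1 TT2)"
  shows "\<exists>t'. (Y d f, Ev (rho x), t') \<in> a_trans (TPO DG FG) \<and> INV (q1', q2') t'"
proof -
  obtain d1 f1 d2 f2 X1 X2 F1 F2 where
     R: "RD G1 S1 oe1 ob1 d1 X1" "RF G1 oe1 b1 f1 F1" "RD G2 S2 oe2 ob2 d2 X2" "RF G2 oe2 b2 f2 F2"
     and g: "gD (Y d f :: (_, _, 'e) tstate) = X1 \<times> X2" "gF (Y d f :: (_, _, 'e) tstate) = F1 \<times> F2"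
     and q: "(q1, q2) = (lst (a_alph G1) d1 f1 (Y d f), lst (a_alph G2) d2 f2 (Y d f))"
     and r: "Y d f \<in> reachable_set (TPO_raw DG FG)"
       "X1 \<times> X2 \<in> reachable_set (delete_states FG PS)"
       "F1 \<times> F2 \<in> reachable_set (det_raw (sync G1 G2))"
     and gd: "good (a_alph G1 \<union> a_alph G2) (Y d f)"
    by (rule INV_E[OF I])
  have q12: "q1 = Y d1 f1" "q2 = Y d2 f2" using q by auto
  have df: "d = X1 \<times> X2" "f = F1 \<times> F2" using g by auto
  from sync_dec[OF tr] show ?thesis
  proof (elim disjE conjE)
    assume t1: "(q1, Ev x, q1') \<in> a_trans TT1" and t2: "(q2, Ev x, q2') \<in> a_trans TT2"
    from tt_Y[OF t1[unfolded q12]] obtain e where x: "x = XEv e" by blast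
    have c1: "(e \<in> a_alph G1 \<and> q1' = Z d1 f1 e \<and> UR G1 (post G1 F1 e) \<noteq> {}) \<or> (e \<in> a_alph G2 \<and> e \<notin> a_alph G1 \<and> q1' = Y d1 f1)"
      using CY[OF wf1 oe1 b1 R(2)] t1 q12 x by blast
    have c2: "(e \<in> a_alph G2 \<and> q2' = Z d2 f2 e \<and> UR G2 (post G2 F2 e) \<noteq> {}) \<or> (e \<in> a_alph G1 \<and> e \<notin> a_alph G2 \<and> q2' = Y d2 f2)"
      using CY[OF wf2 oe2 b2 R(4)] t2 q12 x by blast
    have es: "e \<in> a_alph G1 \<union> a_alph G2" using c1 by blast
    have "(F1 \<times> F2, Ev e, stp G1 F1 e \<times> stp G2 F2 e) \<in> a_trans FG"
      using FG_defined[OF R(2) R(4) r(3) es] c1 c2 by blast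
    then have "defined_at FG e f" unfolding defined_at_def df by blast
    then have "(Y d f, Ev (TEv e), Z d f e) \<in> tpo_trans DG FG" unfolding tpo_Y by blast
    from TG_step[OF r(1) this] have tg: "(Y d f, Ev (TEv e), Z d f e) \<in> a_trans (TPO DG FG)"
      "Z d f e \<in> reachable_set (TPO_raw DG FG)" by auto
    have "(q1', q2') = (lst (a_alph G1) d1 f1 (Z d f e), lst (a_alph G2) d2 f2 (Z d f e))"
      using c1 c2 by auto
    then have "INV (q1', q2') (Z d f e)"
      using INV_I[OF R _ _ _ tg(2) r(2,3)] df es by simp
    then show ?thesis using tg(1) x by auto
  next
    assume t1: "(q1, Ev x, q1') \<in> a_trans TT1" and n: "x \<notin> a_alph TT2"
    from tt_Y[OF t1[unfolded q12]] obtain e where x: "x = XEv e" by blast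
    have c1: "(e \<in> a_alph G1 \<and> q1' = Z d1 f1 e \<and> UR G1 (post G1 F1 e) \<noteq> {}) \<or> (e \<in> a_alph G2 \<and> e \<notin> a_alph G1 \<and> q1' = Y d1 f1)"
      using CY[OF wf1 oe1 b1 R(2)] t1 q12 x by blast
    have "e \<in> a_alph G2 \<union> a_alph G1" using c1 by blast
    from A1[OF this] n x show ?thesis by blast
  next
    assume t2: "(q2, Ev x, q2') \<in> a_trans TT2" and n: "x \<notin> a_alph TT1"
    from tt_Y[OF t2[unfolded q12]] obtain e where x: "x = XEv e" by blast
    have c2: "(e \<in> a_alph G2 \<and> q2' = Z d2 f2 e \<and> UR G2 (post G2 F2 e) \<noteq> {}) \<or> (e \<in> a_alph G1 \<and> e \<notin> a_alph G2 \<and> q2' = Y d2 f2)"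
      using CY[OF wf2 oe2 b2 R(4)] t2 q12 x by blast
    have "e \<in> a_alph G1 \<union> a_alph G2" using c2 by blast
    from A1[OF this] n x show ?thesis by blast
  qed
qed


lemma RD_stp:
  assumes "RD G S oe ob d X" "\<sigma> \<notin> a_alph G"
  shows "RD G S oe ob d (stp G X \<sigma>)"
  using assms unfolding stp_def by simp

lemma RF_stp:
  assumes "RF G oe b d X" "\<sigma> \<notin> a_alph G"
  shows "RF G oe b d (stp G X \<sigma>)"
  using assms unfolding stp_def by simp

lemma stp_in: "\<sigma> \<in> a_alph G \<Longrightarrow> stp G X \<sigma> = UR G (post G X \<sigma>)"
  unfolding stp_def by simp

lemma stp_out: "\<sigma> \<notin> a_alph G \<Longrightarrow> stp G X \<sigma> = X"
  unfolding stp_def by simp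

lemma stepZ:
  assumes I: "INV (q1, q2) (Z d f e)"
    and tr: "((q1, q2), Ev x, (q1', q2')) \<in> a_trans (sync TT1 TT2)"
  shows "\<exists>t'. (Z d f e, Ev (rho x), t') \<in> a_trans (TPO DG FG) \<and> INV (q1', q2') t'"
proof -
  obtain d1 f1 d2 f2 X1 X2 F1 F2 where
     R: "RD G1 S1 oe1 ob1 d1 X1" "RF G1 oe1 b1 f1 F1" "RD G2 S2 oe2 ob2 d2 X2" "RF G2 oe2 b2 f2 F2"
     and g: "gD (Z d f e :: (_, _, 'e) tstate) = X1 \<times> X2" "gF (Z d f e :: (_, _, 'e) tstate) = F1 \<times> F2"
     and q: "(q1, q2) = (lst (a_alph G1) d1 f1 (Z d f e), lst (a_alph G2) d2 f2 (Z d f e))"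
     and r: "Z d f e \<in> reachable_set (TPO_raw DG FG)"
       "X1 \<times> X2 \<in> reachable_set (delete_states FG PS)"
       "F1 \<times> F2 \<in> reachable_set (det_raw (sync G1 G2))"
     and gd: "good (a_alph G1 \<union> a_alph G2) (Z d f e)"
    by (rule INV_E[OF I])
  have df: "d = X1 \<times> X2" "f = F1 \<times> F2" using g by auto
  have es: "e \<in> a_alph G1 \<union> a_alph G2" using gd by simp
  have q1: "q1 = (if e \<in> a_alph G1 then Z d1 f1 e else Y d1 f1)" using q by simp
  have q2: "q2 = (if e \<in> a_alph G2 then Z d2 f2 e else Y d2 f2)" using q by simp
  have Y1: "\<exists>e'. x = XEv e' \<and> e' \<in> a_alph G1 \<union> a_alph G2" if "(Y d1 f1, Ev x, q1') \<in> a_trans TT1"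
  proof -
    from tt_Y[OF that] obtain e' where x: "x = XEv e'" by blast
    show ?thesis using CY[OF wf1 oe1 b1 R(2)] that x by blast
  qed
  have Y2: "\<exists>e'. x = XEv e' \<and> e' \<in> a_alph G1 \<union> a_alph G2" if "(Y d2 f2, Ev x, q2') \<in> a_trans TT2"
  proof -
    from tt_Y[OF that] obtain e' where x: "x = XEv e'" by blast
    show ?thesis using CY[OF wf2 oe2 b2 R(4)] that x by blast
  qed
  have Zx1: "\<exists>\<theta>. x = Theta \<theta> e" if "(Z d1 f1 e, Ev x, q1') \<in> a_trans TT1"
    using tt_Z[OF that] by blast
  have Zx2: "\<exists>\<theta>. x = Theta \<theta> e" if "(Z d2 f2 e, Ev x, q2') \<in> a_trans TT2"
    using tt_Z[OF that] by blast
  have GT: "\<exists>t'. (Z d f e, Ev (TEv \<theta>), t') \<in> a_trans (TPO DG FG) \<and> INV (q1', q2') t'"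
    if th: "\<theta> \<in> a_alph G1 \<union> a_alph G2"
      and m1: "RD G1 S1 oe1 ob1 d1' (stp G1 X1 \<theta>)" and m2: "RD G2 S2 oe2 ob2 d2' (stp G2 X2 \<theta>)"
      and n1: "\<theta> \<in> a_alph G1 \<Longrightarrow> \<exists>d. RD G1 S1 oe1 ob1 d (UR G1 (post G1 X1 \<theta>))"
      and n2: "\<theta> \<in> a_alph G2 \<Longrightarrow> \<exists>d. RD G2 S2 oe2 ob2 d (UR G2 (post G2 X2 \<theta>))"
      and qq: "(q1', q2') = (lst (a_alph G1) d1' f1 (Z d f e), lst (a_alph G2) d2' f2 (Z d f e))"
    for \<theta> d1' d2'
  proof -
    let ?d' = "stp G1 X1 \<theta> \<times> stp G2 X2 \<theta>"
    from DG_step[OF R(1) R(3) r(2) th n1 n2] have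
      dg: "(d, Ev \<theta>, ?d') \<in> a_trans DG" "?d' \<in> reachable_set (delete_states FG PS)"
      using df by auto
    then have "(Z d f e, Ev (TEv \<theta>), Z ?d' f e) \<in> tpo_trans DG FG" unfolding tpo_Z by blast
    from TG_step[OF r(1) this] have tg: "(Z d f e, Ev (TEv \<theta>), Z ?d' f e) \<in> a_trans (TPO DG FG)"
      "Z ?d' f e \<in> reachable_set (TPO_raw DG FG)" by auto
    have "INV (q1', q2') (Z ?d' f e)"
      using INV_I[OF m1 R(2) m2 R(4) _ _ _ tg(2) dg(2) r(3)] df es qq by simp
    then show ?thesis using tg(1) by blast
  qed
  have GE: "\<exists>t'. (Z d f e, Ev tlab.Eps, t') \<in> a_trans (TPO DG FG) \<and> INV (q1', q2') t'"
    if n1: "e \<in> a_alph G1 \<Longrightarrow> \<exists>d. RD G1 S1 oe1 ob1 d (UR G1 (post G1 X1 e))"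
      and n2: "e \<in> a_alph G2 \<Longrightarrow> \<exists>d. RD G2 S2 oe2 ob2 d (UR G2 (post G2 X2 e))"
      and m1: "e \<in> a_alph G1 \<Longrightarrow> \<exists>f. RF G1 oe1 b1 f (UR G1 (post G1 F1 e))"
      and m2: "e \<in> a_alph G2 \<Longrightarrow> \<exists>f. RF G2 oe2 b2 f (UR G2 (post G2 F2 e))"
      and qq: "(q1', q2') = (lst (a_alph G1) d1 f1 (W d f (TEv e)), lst (a_alph G2) d2 f2 (W d f (TEv e)))"
  proof -
    from DG_step[OF R(1) R(3) r(2) es n1 n2] have "defined_at DG e d"
      unfolding defined_at_def df by blast
    moreover have "defined_at FG e f"
    proof -
      have "e \<in> a_alph G1 \<Longrightarrow> UR G1 (post G1 F1 e) \<noteq> {}" using m1 RF_ne by blast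
      moreover have "e \<in> a_alph G2 \<Longrightarrow> UR G2 (post G2 F2 e) \<noteq> {}" using m2 RF_ne by blast
      ultimately show ?thesis using FG_defined[OF R(2) R(4) r(3) es] unfolding defined_at_def df by blast
    qed
    ultimately have "(Z d f e, Ev tlab.Eps, W d f (TEv e)) \<in> tpo_trans DG FG" unfolding tpo_Z by blast
    from TG_step[OF r(1) this] have tg: "(Z d f e, Ev tlab.Eps, W d f (TEv e)) \<in> a_trans (TPO DG FG)"
      "W d f (TEv e) \<in> reachable_set (TPO_raw DG FG)" by auto
    have "INV (q1', q2') (W d f (TEv e))"
      using INV_I[OF R _ _ _ tg(2) r(2) r(3)] df es qq by simp
    then show ?thesis using tg(1) by blast
  qed
  have GR: "\<exists>t'. (Z d f e, Ev (Erase e), t') \<in> a_trans (TPO DG FG) \<and> INV (q1', q2') t'"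
    if m1: "e \<in> a_alph G1 \<Longrightarrow> \<exists>f. RF G1 oe1 b1 f (UR G1 (post G1 F1 e))"
      and m2: "e \<in> a_alph G2 \<Longrightarrow> \<exists>f. RF G2 oe2 b2 f (UR G2 (post G2 F2 e))"
      and qq: "(q1', q2') = (lst (a_alph G1) d1 f1 (W d f (Erase e)), lst (a_alph G2) d2 f2 (W d f (Erase e)))"
  proof -
    have "defined_at FG e f"
    proof -
      have "e \<in> a_alph G1 \<Longrightarrow> UR G1 (post G1 F1 e) \<noteq> {}" using m1 RF_ne by blast
      moreover have "e \<in> a_alph G2 \<Longrightarrow> UR G2 (post G2 F2 e) \<noteq> {}" using m2 RF_ne by blast
      ultimately show ?thesis using FG_defined[OF R(2) R(4) r(3) es] unfolding defined_at_def df by blast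
    qed
    then have "(Z d f e, Ev (Erase e), W d f (Erase e)) \<in> tpo_trans DG FG" unfolding tpo_Z by blast
    from TG_step[OF r(1) this] have tg: "(Z d f e, Ev (Erase e), W d f (Erase e)) \<in> a_trans (TPO DG FG)"
      "W d f (Erase e) \<in> reachable_set (TPO_raw DG FG)" by auto
    have "INV (q1', q2') (W d f (Erase e))"
      using INV_I[OF R _ _ _ tg(2) r(2) r(3)] df es qq by simp
    then show ?thesis using tg(1) by blast
  qed
  from sync_dec[OF tr] show ?thesis
  proof (elim disjE conjE)
    assume t1: "(q1, Ev x, q1') \<in> a_trans TT1" and t2: "(q2, Ev x, q2') \<in> a_trans TT2"
    show ?thesis
    proof (cases "e \<in> a_alph G1 \<and> e \<in> a_alph G2")
      case False
      then have "(e \<in> a_alph G1 \<and> e \<notin> a_alph G2) \<or> (e \<notin> a_alph G1 \<and> e \<in> a_alph G2)" using es by blast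
      then show ?thesis
      proof
        assume a: "e \<in> a_alph G1 \<and> e \<notin> a_alph G2"
        then have "\<exists>\<theta>. x = Theta \<theta> e" using Zx1 t1 q1 by simp
        moreover have "\<exists>e'. x = XEv e' \<and> e' \<in> a_alph G1 \<union> a_alph G2" using Y2 t2 q2 a by simp
        ultimately show ?thesis by auto
      next
        assume a: "e \<notin> a_alph G1 \<and> e \<in> a_alph G2"
        then have "\<exists>\<theta>. x = Theta \<theta> e" using Zx2 t2 q2 by simp
        moreover have "\<exists>e'. x = XEv e' \<and> e' \<in> a_alph G1 \<union> a_alph G2" using Y1 t1 q1 a by simp
        ultimately show ?thesis by auto
      qed
    next
      case True
      then have tt1: "(Z d1 f1 e, Ev x, q1') \<in> a_trans TT1" and tt2: "(Z d2 f2 e, Ev x, q2') \<in> a_trans TT2"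
        using t1 t2 q1 q2 by auto
      note c1 = CZ[OF wf1 oe1 ob1 b1 R(1) R(2) tt1]
      note c2 = CZ[OF wf2 oe2 ob2 b2 R(3) R(4) tt2]
      from c1 show ?thesis
      proof (elim disjE)
        assume "\<exists>\<theta> d'. x = Theta (TEv \<theta>) e \<and> \<theta> \<in> a_alph G1 \<and> q1' = Z d' f1 e \<and> RD G1 S1 oe1 ob1 d' (UR G1 (post G1 X1 \<theta>))"
        then obtain \<theta> d1' where x: "x = Theta (TEv \<theta>) e" and th1: "\<theta> \<in> a_alph G1" and q1': "q1' = Z d1' f1 e"
          and m1: "RD G1 S1 oe1 ob1 d1' (UR G1 (post G1 X1 \<theta>))" by blast
        from c2 x obtain d2' where th2: "\<theta> \<in> a_alph G2" and q2': "q2' = Z d2' f2 e"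
          and m2: "RD G2 S2 oe2 ob2 d2' (UR G2 (post G2 X2 \<theta>))" by auto
        have "\<exists>t'. (Z d f e, Ev (TEv \<theta>), t') \<in> a_trans (TPO DG FG) \<and> INV (q1', q2') t'"
          using GT[of \<theta> d1' d2'] th1 th2 m1 m2 q1' q2' True by (simp add: stp_in) blast
        then show ?thesis using x by simp
      next
        assume "x = Theta tlab.Eps e \<and> e \<in> a_alph G1 \<and> q1' = W d1 f1 (TEv e)
          \<and> (\<exists>d'. RD G1 S1 oe1 ob1 d' (UR G1 (post G1 X1 e))) \<and> (\<exists>f'. RF G1 oe1 b1 f' (UR G1 (post G1 F1 e)))"
        then have x: "x = Theta tlab.Eps e" and q1': "q1' = W d1 f1 (TEv e)"
          and n1: "\<exists>d'. RD G1 S1 oe1 ob1 d' (UR G1 (post G1 X1 e))"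
          and m1: "\<exists>f'. RF G1 oe1 b1 f' (UR G1 (post G1 F1 e))" by blast+
        from c2 x have q2': "q2' = W d2 f2 (TEv e)"
          and n2: "\<exists>d'. RD G2 S2 oe2 ob2 d' (UR G2 (post G2 X2 e))"
          and m2: "\<exists>f'. RF G2 oe2 b2 f' (UR G2 (post G2 F2 e))" by auto
        have "\<exists>t'. (Z d f e, Ev tlab.Eps, t') \<in> a_trans (TPO DG FG) \<and> INV (q1', q2') t'"
          proof -
            have qq: "(q1', q2') = (lst (a_alph G1) d1 f1 (W d f (TEv e)), lst (a_alph G2) d2 f2 (W d f (TEv e)))" using q1' q2' True by simp
            show ?thesis using GE[OF _ _ _ _ qq] n1 n2 m1 m2 by blast
          qed
        then show ?thesis using x by simp
      next
        assume "x = Theta (Erase e) e \<and> e \<in> a_alph G1 \<and> q1' = W d1 f1 (Erase e) \<and> (\<exists>f'. RF G1 oe1 b1 f' (UR G1 (post G1 F1 e)))"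
        then have x: "x = Theta (Erase e) e" and q1': "q1' = W d1 f1 (Erase e)"
          and m1: "\<exists>f'. RF G1 oe1 b1 f' (UR G1 (post G1 F1 e))" by blast+
        from c2 x have q2': "q2' = W d2 f2 (Erase e)"
          and m2: "\<exists>f'. RF G2 oe2 b2 f' (UR G2 (post G2 F2 e))" by auto
        have "\<exists>t'. (Z d f e, Ev (Erase e), t') \<in> a_trans (TPO DG FG) \<and> INV (q1', q2') t'"
          proof -
            have qq: "(q1', q2') = (lst (a_alph G1) d1 f1 (W d f (Erase e)), lst (a_alph G2) d2 f2 (W d f (Erase e)))" using q1' q2' True by simp
            show ?thesis using GR[OF _ _ qq] m1 m2 by blast
          qed
        then show ?thesis using x by simp
      qed
    qed
  next
    assume t1: "(q1, Ev x, q1') \<in> a_trans TT1" and nx: "x \<notin> a_alph TT2" and q2': "q2' = q2"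
      and q2s: "q2 \<in> a_states TT2"
    show ?thesis
    proof (cases "e \<in> a_alph G1")
      case False
      then obtain e' where "x = XEv e'" "e' \<in> a_alph G1 \<union> a_alph G2" using Y1 t1 q1 by auto
      then show ?thesis using A1[of e' "a_alph G2" "a_alph G1"] nx by (auto simp: Un_commute)
    next
      case True
      then have tt1: "(Z d1 f1 e, Ev x, q1') \<in> a_trans TT1" using t1 q1 by simp
      have st2: "e \<in> a_alph G2 \<Longrightarrow> Z d2 f2 e \<in> a_states (local_TPO G2 S2 oe2 ob2 b2)"
        using q2s q2 by simp
      note c1 = CZ[OF wf1 oe1 ob1 b1 R(1) R(2) tt1]
      from c1 show ?thesis
      proof (elim disjE)
        assume "\<exists>\<theta> d'. x = Theta (TEv \<theta>) e \<and> \<theta> \<in> a_alph G1 \<and> q1' = Z d' f1 e \<and> RD G1 S1 oe1 ob1 d' (UR G1 (post G1 X1 \<theta>))"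
        then obtain \<theta> d1' where x: "x = Theta (TEv \<theta>) e" and th1: "\<theta> \<in> a_alph G1" and q1': "q1' = Z d1' f1 e"
          and m1: "RD G1 S1 oe1 ob1 d1' (UR G1 (post G1 X1 \<theta>))" by blast
        have th2: "\<theta> \<notin> a_alph G2"
        proof
          assume th2: "\<theta> \<in> a_alph G2"
          show False
          proof (cases "e \<in> a_alph G2")
            case True
            then show False using A2[OF st2[OF True], of "TEv \<theta>" "a_alph G2" "a_alph G1"] th2 nx x by blast
          next
            case False
            then show False using A3[OF th2 th1 True False, of "local_TPO G2 S2 oe2 ob2 b2"] nx x by blast
          qed
        qed
        have "\<exists>t'. (Z d f e, Ev (TEv \<theta>), t') \<in> a_trans (TPO DG FG) \<and> INV (q1', q2') t'"
          proof -
            have qq: "(q1', q2') = (lst (a_alph G1) d1' f1 (Z d f e), lst (a_alph G2) d2 f2 (Z d f e))"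
              using q1' q2' q2 True by simp
            have a1: "RD G1 S1 oe1 ob1 d1' (stp G1 X1 \<theta>)" using m1 th1 by (simp add: stp_in)
            have a2: "RD G2 S2 oe2 ob2 d2 (stp G2 X2 \<theta>)" using R(3) th2 by (rule RD_stp)
            show ?thesis using GT[OF _ a1 a2 _ _ qq] th1 m1 th2 by blast
          qed
        then show ?thesis using x by simp
      next
        assume "x = Theta tlab.Eps e \<and> e \<in> a_alph G1 \<and> q1' = W d1 f1 (TEv e)
          \<and> (\<exists>d'. RD G1 S1 oe1 ob1 d' (UR G1 (post G1 X1 e))) \<and> (\<exists>f'. RF G1 oe1 b1 f' (UR G1 (post G1 F1 e)))"
        then have x: "x = Theta tlab.Eps e" and q1': "q1' = W d1 f1 (TEv e)"
          and n1: "\<exists>d'. RD G1 S1 oe1 ob1 d' (UR G1 (post G1 X1 e))"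
          and m1: "\<exists>f'. RF G1 oe1 b1 f' (UR G1 (post G1 F1 e))" by blast+
        have e2: "e \<notin> a_alph G2"
        proof
          assume e2: "e \<in> a_alph G2"
          show False using A2[OF st2[OF e2], of tlab.Eps "a_alph G2" "a_alph G1"] nx x by blast
        qed
        have "\<exists>t'. (Z d f e, Ev tlab.Eps, t') \<in> a_trans (TPO DG FG) \<and> INV (q1', q2') t'"
          proof -
            have qq: "(q1', q2') = (lst (a_alph G1) d1 f1 (W d f (TEv e)), lst (a_alph G2) d2 f2 (W d f (TEv e)))" using q1' q2' q2 e2 True by simp
            show ?thesis using GE[OF _ _ _ _ qq] n1 m1 e2 by blast
          qed
        then show ?thesis using x by simp
      next
        assume "x = Theta (Erase e) e \<and> e \<in> a_alph G1 \<and> q1' = W d1 f1 (Erase e) \<and> (\<exists>f'. RF G1 oe1 b1 f' (UR G1 (post G1 F1 e)))"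
        then have x: "x = Theta (Erase e) e" and q1': "q1' = W d1 f1 (Erase e)"
          and m1: "\<exists>f'. RF G1 oe1 b1 f' (UR G1 (post G1 F1 e))" by blast+
        have e2: "e \<notin> a_alph G2"
        proof
          assume e2: "e \<in> a_alph G2"
          show False using A2[OF st2[OF e2], of "Erase e" "a_alph G2" "a_alph G1"] e2 nx x by blast
        qed
        have "\<exists>t'. (Z d f e, Ev (Erase e), t') \<in> a_trans (TPO DG FG) \<and> INV (q1', q2') t'"
          proof -
            have qq: "(q1', q2') = (lst (a_alph G1) d1 f1 (W d f (Erase e)), lst (a_alph G2) d2 f2 (W d f (Erase e)))" using q1' q2' q2 e2 True by simp
            show ?thesis using GR[OF _ _ qq] m1 e2 by blast
          qed
        then show ?thesis using x by simp
      qed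
    qed
  next
    assume t2: "(q2, Ev x, q2') \<in> a_trans TT2" and nx: "x \<notin> a_alph TT1" and q1': "q1' = q1"
      and q1s: "q1 \<in> a_states TT1"
    show ?thesis
    proof (cases "e \<in> a_alph G2")
      case False
      then obtain e' where "x = XEv e'" "e' \<in> a_alph G1 \<union> a_alph G2" using Y2 t2 q2 by auto
      then show ?thesis using A1[of e' "a_alph G1" "a_alph G2"] nx by auto
    next
      case True
      then have tt2: "(Z d2 f2 e, Ev x, q2') \<in> a_trans TT2" using t2 q2 by simp
      have st1: "e \<in> a_alph G1 \<Longrightarrow> Z d1 f1 e \<in> a_states (local_TPO G1 S1 oe1 ob1 b1)"
        using q1s q1 by simp
      note c2 = CZ[OF wf2 oe2 ob2 b2 R(3) R(4) tt2]
      from c2 show ?thesis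
      proof (elim disjE)
        assume "\<exists>\<theta> d'. x = Theta (TEv \<theta>) e \<and> \<theta> \<in> a_alph G2 \<and> q2' = Z d' f2 e \<and> RD G2 S2 oe2 ob2 d' (UR G2 (post G2 X2 \<theta>))"
        then obtain \<theta> d2' where x: "x = Theta (TEv \<theta>) e" and th2: "\<theta> \<in> a_alph G2" and q2': "q2' = Z d2' f2 e"
          and m2: "RD G2 S2 oe2 ob2 d2' (UR G2 (post G2 X2 \<theta>))" by blast
        have th1: "\<theta> \<notin> a_alph G1"
        proof
          assume th1: "\<theta> \<in> a_alph G1"
          show False
          proof (cases "e \<in> a_alph G1")
            case True
            then show False using A2[OF st1[OF True], of "TEv \<theta>" "a_alph G1" "a_alph G2"] th1 nx x by blast
          next
            case False
            then show False using A3[OF th1 th2 True False, of "local_TPO G1 S1 oe1 ob1 b1"] nx x by blast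
          qed
        qed
        have "\<exists>t'. (Z d f e, Ev (TEv \<theta>), t') \<in> a_trans (TPO DG FG) \<and> INV (q1', q2') t'"
          proof -
            have qq: "(q1', q2') = (lst (a_alph G1) d1 f1 (Z d f e), lst (a_alph G2) d2' f2 (Z d f e))"
              using q1' q2' q1 True by simp
            have a2: "RD G2 S2 oe2 ob2 d2' (stp G2 X2 \<theta>)" using m2 th2 by (simp add: stp_in)
            have a1: "RD G1 S1 oe1 ob1 d1 (stp G1 X1 \<theta>)" using R(1) th1 by (rule RD_stp)
            show ?thesis using GT[OF _ a1 a2 _ _ qq] th2 m2 th1 by blast
          qed
        then show ?thesis using x by simp
      next
        assume "x = Theta tlab.Eps e \<and> e \<in> a_alph G2 \<and> q2' = W d2 f2 (TEv e)
          \<and> (\<exists>d'. RD G2 S2 oe2 ob2 d' (UR G2 (post G2 X2 e))) \<and> (\<exists>f'. RF G2 oe2 b2 f' (UR G2 (post G2 F2 e)))"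
        then have x: "x = Theta tlab.Eps e" and q2': "q2' = W d2 f2 (TEv e)"
          and n2: "\<exists>d'. RD G2 S2 oe2 ob2 d' (UR G2 (post G2 X2 e))"
          and m2: "\<exists>f'. RF G2 oe2 b2 f' (UR G2 (post G2 F2 e))" by blast+
        have e1: "e \<notin> a_alph G1"
        proof
          assume e1: "e \<in> a_alph G1"
          show False using A2[OF st1[OF e1], of tlab.Eps "a_alph G1" "a_alph G2"] nx x by blast
        qed
        have "\<exists>t'. (Z d f e, Ev tlab.Eps, t') \<in> a_trans (TPO DG FG) \<and> INV (q1', q2') t'"
          proof -
            have qq: "(q1', q2') = (lst (a_alph G1) d1 f1 (W d f (TEv e)), lst (a_alph G2) d2 f2 (W d f (TEv e)))" using q1' q2' q1 e1 True by simp
            show ?thesis using GE[OF _ _ _ _ qq] n2 m2 e1 by blast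
          qed
        then show ?thesis using x by simp
      next
        assume "x = Theta (Erase e) e \<and> e \<in> a_alph G2 \<and> q2' = W d2 f2 (Erase e) \<and> (\<exists>f'. RF G2 oe2 b2 f' (UR G2 (post G2 F2 e)))"
        then have x: "x = Theta (Erase e) e" and q2': "q2' = W d2 f2 (Erase e)"
          and m2: "\<exists>f'. RF G2 oe2 b2 f' (UR G2 (post G2 F2 e))" by blast+
        have e1: "e \<notin> a_alph G1"
        proof
          assume e1: "e \<in> a_alph G1"
          show False using A2[OF st1[OF e1], of "Erase e" "a_alph G1" "a_alph G2"] e1 nx x by blast
        qed
        have "\<exists>t'. (Z d f e, Ev (Erase e), t') \<in> a_trans (TPO DG FG) \<and> INV (q1', q2') t'"
          proof -
            have qq: "(q1', q2') = (lst (a_alph G1) d1 f1 (W d f (Erase e)), lst (a_alph G2) d2 f2 (W d f (Erase e)))" using q1' q2' q1 e1 True by simp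
            show ?thesis using GR[OF _ _ qq] m2 e1 by blast
          qed
        then show ?thesis using x by simp
      qed
    qed
  qed
qed

lemma lst_W: "a = TEv e \<or> a = Erase e \<Longrightarrow> lst U dd ff (W d f a) = (if e \<in> U then W dd ff a else Y dd ff)"
  by auto

lemma stepW:
  assumes I: "INV (q1, q2) (W d f a)"
    and tr: "((q1, q2), Ev x, (q1', q2')) \<in> a_trans (sync TT1 TT2)"
  shows "\<exists>t'. (W d f a, Ev (rho x), t') \<in> a_trans (TPO DG FG) \<and> INV (q1', q2') t'"
proof -
  obtain d1 f1 d2 f2 X1 X2 F1 F2 where
     R: "RD G1 S1 oe1 ob1 d1 X1" "RF G1 oe1 b1 f1 F1" "RD G2 S2 oe2 ob2 d2 X2" "RF G2 oe2 b2 f2 F2"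
     and g: "gD (W d f a :: (_, _, 'e) tstate) = X1 \<times> X2" "gF (W d f a :: (_, _, 'e) tstate) = F1 \<times> F2"
     and q: "(q1, q2) = (lst (a_alph G1) d1 f1 (W d f a), lst (a_alph G2) d2 f2 (W d f a))"
     and r: "W d f a \<in> reachable_set (TPO_raw DG FG)"
       "X1 \<times> X2 \<in> reachable_set (delete_states FG PS)"
       "F1 \<times> F2 \<in> reachable_set (det_raw (sync G1 G2))"
     and gd: "good (a_alph G1 \<union> a_alph G2) (W d f a)"
    by (rule INV_E[OF I])
  have df: "d = X1 \<times> X2" "f = F1 \<times> F2" using g by auto
  obtain e where ae: "a = TEv e \<or> a = Erase e" and es: "e \<in> a_alph G1 \<union> a_alph G2"
    using gd by (cases a) auto
  have q1: "q1 = (if e \<in> a_alph G1 then W d1 f1 a else Y d1 f1)" using q by (simp add: lst_W[OF ae])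
  have q2: "q2 = (if e \<in> a_alph G2 then W d2 f2 a else Y d2 f2)" using q by (simp add: lst_W[OF ae])
  have Y1: "\<exists>e'. x = XEv e' \<and> e' \<in> a_alph G1 \<union> a_alph G2" if "(Y d1 f1, Ev x, q1') \<in> a_trans TT1"
  proof -
    from tt_Y[OF that] obtain e' where x: "x = XEv e'" by blast
    show ?thesis using CY[OF wf1 oe1 b1 R(2)] that x by blast
  qed
  have Y2: "\<exists>e'. x = XEv e' \<and> e' \<in> a_alph G1 \<union> a_alph G2" if "(Y d2 f2, Ev x, q2') \<in> a_trans TT2"
  proof -
    from tt_Y[OF that] obtain e' where x: "x = XEv e'" by blast
    show ?thesis using CY[OF wf2 oe2 b2 R(4)] that x by blast
  qed
  have Wx1: "\<exists>\<sigma>. x = SigW \<sigma> a" if "(W d1 f1 a, Ev x, q1') \<in> a_trans TT1"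
    using tt_W[OF that] by blast
  have Wx2: "\<exists>\<sigma>. x = SigW \<sigma> a" if "(W d2 f2 a, Ev x, q2') \<in> a_trans TT2"
    using tt_W[OF that] by blast
  have GWT: "\<exists>t'. (W d f a, Ev (TEv e), t') \<in> a_trans (TPO DG FG) \<and> INV (q1', q2') t'"
    if a: "a = TEv e"
      and mD1: "RD G1 S1 oe1 ob1 d1' (stp G1 X1 e)" and mD2: "RD G2 S2 oe2 ob2 d2' (stp G2 X2 e)"
      and mF1: "RF G1 oe1 b1 f1' (stp G1 F1 e)" and mF2: "RF G2 oe2 b2 f2' (stp G2 F2 e)"
      and n1: "e \<in> a_alph G1 \<Longrightarrow> \<exists>d. RD G1 S1 oe1 ob1 d (UR G1 (post G1 X1 e))"
      and n2: "e \<in> a_alph G2 \<Longrightarrow> \<exists>d. RD G2 S2 oe2 ob2 d (UR G2 (post G2 X2 e))"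
      and k1: "e \<in> a_alph G1 \<Longrightarrow> UR G1 (post G1 F1 e) \<noteq> {}"
      and k2: "e \<in> a_alph G2 \<Longrightarrow> UR G2 (post G2 F2 e) \<noteq> {}"
      and qq: "(q1', q2') = (Y d1' f1', Y d2' f2')"
    for d1' d2' f1' f2'
  proof -
    let ?d' = "stp G1 X1 e \<times> stp G2 X2 e"
    let ?f' = "stp G1 F1 e \<times> stp G2 F2 e"
    from DG_step[OF R(1) R(3) r(2) es n1 n2] have
      dg: "(d, Ev e, ?d') \<in> a_trans DG" "?d' \<in> reachable_set (delete_states FG PS)"
      using df by auto
    from FG_defined[OF R(2) R(4) r(3) es k1 k2] have
      fg: "(f, Ev e, ?f') \<in> a_trans FG" "?f' \<in> reachable_set (det_raw (sync G1 G2))"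
      using df by auto
    have "(W d f a, Ev (TEv e), Y ?d' ?f') \<in> tpo_trans DG FG" unfolding tpo_W using a dg(1) fg(1) by blast
    from TG_step[OF r(1) this] have tg: "(W d f a, Ev (TEv e), Y ?d' ?f') \<in> a_trans (TPO DG FG)"
      "Y ?d' ?f' \<in> reachable_set (TPO_raw DG FG)" by auto
    have "INV (q1', q2') (Y ?d' ?f')"
      using INV_I[OF mD1 mF1 mD2 mF2 _ _ _ tg(2) dg(2) fg(2)] qq by simp
    then show ?thesis using tg(1) by blast
  qed
  have GWR: "\<exists>t'. (W d f a, Ev (TEv e), t') \<in> a_trans (TPO DG FG) \<and> INV (q1', q2') t'"
    if a: "a = Erase e"
      and mF1: "RF G1 oe1 b1 f1' (stp G1 F1 e)" and mF2: "RF G2 oe2 b2 f2' (stp G2 F2 e)"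
      and k1: "e \<in> a_alph G1 \<Longrightarrow> UR G1 (post G1 F1 e) \<noteq> {}"
      and k2: "e \<in> a_alph G2 \<Longrightarrow> UR G2 (post G2 F2 e) \<noteq> {}"
      and qq: "(q1', q2') = (Y d1 f1', Y d2 f2')"
    for f1' f2'
  proof -
    let ?f' = "stp G1 F1 e \<times> stp G2 F2 e"
    from FG_defined[OF R(2) R(4) r(3) es k1 k2] have
      fg: "(f, Ev e, ?f') \<in> a_trans FG" "?f' \<in> reachable_set (det_raw (sync G1 G2))"
      using df by auto
    have "(W d f a, Ev (TEv e), Y d ?f') \<in> tpo_trans DG FG" unfolding tpo_W using a fg(1) by blast
    from TG_step[OF r(1) this] have tg: "(W d f a, Ev (TEv e), Y d ?f') \<in> a_trans (TPO DG FG)"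
      "Y d ?f' \<in> reachable_set (TPO_raw DG FG)" by auto
    have "INV (q1', q2') (Y d ?f')"
      using INV_I[OF R(1) mF1 R(3) mF2 _ _ _ tg(2) r(2) fg(2)] qq df by simp
    then show ?thesis using tg(1) by blast
  qed
  have RFn: "RF G oe b f' (UR G (post G F e)) \<Longrightarrow> UR G (post G F e) \<noteq> {}" for G oe b f' F
    using RF_ne by blast
  from sync_dec[OF tr] show ?thesis
  proof (elim disjE conjE)
    assume t1: "(q1, Ev x, q1') \<in> a_trans TT1" and t2: "(q2, Ev x, q2') \<in> a_trans TT2"
    show ?thesis
    proof (cases "e \<in> a_alph G1 \<and> e \<in> a_alph G2")
      case False
      then have "(e \<in> a_alph G1 \<and> e \<notin> a_alph G2) \<or> (e \<notin> a_alph G1 \<and> e \<in> a_alph G2)" using es by blast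
      then show ?thesis
      proof
        assume a: "e \<in> a_alph G1 \<and> e \<notin> a_alph G2"
        then have "\<exists>\<sigma>. x = SigW \<sigma> a" using Wx1 t1 q1 by simp
        moreover have "\<exists>e'. x = XEv e' \<and> e' \<in> a_alph G1 \<union> a_alph G2" using Y2 t2 q2 a by simp
        ultimately show ?thesis by auto
      next
        assume a: "e \<notin> a_alph G1 \<and> e \<in> a_alph G2"
        then have "\<exists>\<sigma>. x = SigW \<sigma> a" using Wx2 t2 q2 by simp
        moreover have "\<exists>e'. x = XEv e' \<and> e' \<in> a_alph G1 \<union> a_alph G2" using Y1 t1 q1 a by simp
        ultimately show ?thesis by auto
      qed
    next
      case True
      then have tt1: "(W d1 f1 a, Ev x, q1') \<in> a_trans TT1" and tt2: "(W d2 f2 a, Ev x, q2') \<in> a_trans TT2"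
        using t1 t2 q1 q2 by auto
      note c1 = CW[OF wf1 oe1 ob1 b1 R(1) R(2) tt1]
      note c2 = CW[OF wf2 oe2 ob2 b2 R(3) R(4) tt2]
      from ae show ?thesis
      proof
        assume a: "a = TEv e"
        from c1 a obtain d1' f1' where x: "x = SigW e a" and q1': "q1' = Y d1' f1'"
          and m1: "RD G1 S1 oe1 ob1 d1' (UR G1 (post G1 X1 e))" "RF G1 oe1 b1 f1' (UR G1 (post G1 F1 e))"
          by auto
        from c2 a obtain d2' f2' where q2': "q2' = Y d2' f2'"
          and m2: "RD G2 S2 oe2 ob2 d2' (UR G2 (post G2 X2 e))" "RF G2 oe2 b2 f2' (UR G2 (post G2 F2 e))"
          by auto
        have "\<exists>t'. (W d f a, Ev (TEv e), t') \<in> a_trans (TPO DG FG) \<and> INV (q1', q2') t'"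
          apply (rule GWT[OF a])
          using m1 m2 True q1' q2' RFn by (simp_all add: stp_in) blast+
        then show ?thesis using x by simp
      next
        assume a: "a = Erase e"
        from c1 a obtain f1' where x: "x = SigW e a" and q1': "q1' = Y d1 f1'"
          and m1: "RF G1 oe1 b1 f1' (UR G1 (post G1 F1 e))"
          by auto
        from c2 a obtain f2' where q2': "q2' = Y d2 f2'"
          and m2: "RF G2 oe2 b2 f2' (UR G2 (post G2 F2 e))"
          by auto
        have "\<exists>t'. (W d f a, Ev (TEv e), t') \<in> a_trans (TPO DG FG) \<and> INV (q1', q2') t'"
          apply (rule GWR[OF a])
          using m1 m2 True q1' q2' RFn by (simp_all add: stp_in) blast+
        then show ?thesis using x by simp
      qed
    qed
  next
    assume t1: "(q1, Ev x, q1') \<in> a_trans TT1" and nx: "x \<notin> a_alph TT2" and q2': "q2' = q2"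
      and q2s: "q2 \<in> a_states TT2"
    show ?thesis
    proof (cases "e \<in> a_alph G1")
      case False
      then obtain e' where "x = XEv e'" "e' \<in> a_alph G1 \<union> a_alph G2" using Y1 t1 q1 by auto
      then show ?thesis using A1[of e' "a_alph G2" "a_alph G1"] nx by (auto simp: Un_commute)
    next
      case True
      then have tt1: "(W d1 f1 a, Ev x, q1') \<in> a_trans TT1" using t1 q1 by simp
      note c1 = CW[OF wf1 oe1 ob1 b1 R(1) R(2) tt1]
      have x: "x = SigW e a" using c1 ae by auto
      have e2: "e \<notin> a_alph G2"
      proof
        assume e2: "e \<in> a_alph G2"
        have "W d2 f2 a \<in> a_states (local_TPO G2 S2 oe2 ob2 b2)" using q2s q2 e2 by simp
        from A4[OF this e2, of "a_alph G1"] nx x show False by blast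
      qed
      from ae show ?thesis
      proof
        assume a: "a = TEv e"
        from c1 a obtain d1' f1' where q1': "q1' = Y d1' f1'"
          and m1: "RD G1 S1 oe1 ob1 d1' (UR G1 (post G1 X1 e))" "RF G1 oe1 b1 f1' (UR G1 (post G1 F1 e))"
          by auto
        have "\<exists>t'. (W d f a, Ev (TEv e), t') \<in> a_trans (TPO DG FG) \<and> INV (q1', q2') t'"
          apply (rule GWT[OF a])
          using m1 R(3) R(4) True e2 q1' q2' q2 RFn by (simp_all add: stp_in stp_out) blast+
        then show ?thesis using x by simp
      next
        assume a: "a = Erase e"
        from c1 a obtain f1' where q1': "q1' = Y d1 f1'"
          and m1: "RF G1 oe1 b1 f1' (UR G1 (post G1 F1 e))"
          by auto
        have "\<exists>t'. (W d f a, Ev (TEv e), t') \<in> a_trans (TPO DG FG) \<and> INV (q1', q2') t'"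
          apply (rule GWR[OF a])
          using m1 R(4) True e2 q1' q2' q2 RFn by (simp_all add: stp_in stp_out) blast+
        then show ?thesis using x by simp
      qed
    qed
  next
    assume t2: "(q2, Ev x, q2') \<in> a_trans TT2" and nx: "x \<notin> a_alph TT1" and q1': "q1' = q1"
      and q1s: "q1 \<in> a_states TT1"
    show ?thesis
    proof (cases "e \<in> a_alph G2")
      case False
      then obtain e' where "x = XEv e'" "e' \<in> a_alph G1 \<union> a_alph G2" using Y2 t2 q2 by auto
      then show ?thesis using A1[of e' "a_alph G1" "a_alph G2"] nx by auto
    next
      case True
      then have tt2: "(W d2 f2 a, Ev x, q2') \<in> a_trans TT2" using t2 q2 by simp
      note c2 = CW[OF wf2 oe2 ob2 b2 R(3) R(4) tt2]
      have x: "x = SigW e a" using c2 ae by auto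
      have e1: "e \<notin> a_alph G1"
      proof
        assume e1: "e \<in> a_alph G1"
        have "W d1 f1 a \<in> a_states (local_TPO G1 S1 oe1 ob1 b1)" using q1s q1 e1 by simp
        from A4[OF this e1, of "a_alph G2"] nx x show False by blast
      qed
      from ae show ?thesis
      proof
        assume a: "a = TEv e"
        from c2 a obtain d2' f2' where q2': "q2' = Y d2' f2'"
          and m2: "RD G2 S2 oe2 ob2 d2' (UR G2 (post G2 X2 e))" "RF G2 oe2 b2 f2' (UR G2 (post G2 F2 e))"
          by auto
        have "\<exists>t'. (W d f a, Ev (TEv e), t') \<in> a_trans (TPO DG FG) \<and> INV (q1', q2') t'"
          apply (rule GWT[OF a])
          using m2 R(1) R(2) True e1 q1' q2' q1 RFn by (simp_all add: stp_in stp_out) blast+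
        then show ?thesis using x by simp
      next
        assume a: "a = Erase e"
        from c2 a obtain f2' where q2': "q2' = Y d2 f2'"
          and m2: "RF G2 oe2 b2 f2' (UR G2 (post G2 F2 e))"
          by auto
        have "\<exists>t'. (W d f a, Ev (TEv e), t') \<in> a_trans (TPO DG FG) \<and> INV (q1', q2') t'"
          apply (rule GWR[OF a])
          using m2 R(2) True e1 q1' q2' q1 RFn by (simp_all add: stp_in stp_out) blast+
        then show ?thesis using x by simp
      qed
    qed
  qed
qed
end


context cfg begin

lemma step:
  assumes I: "INV (q1, q2) t"
    and tr: "((q1, q2), Ev x, (q1', q2')) \<in> a_trans (sync TT1 TT2)"
  shows "\<exists>t'. (t, Ev (rho x), t') \<in> a_trans (TPO DG FG) \<and> INV (q1', q2') t'"
proof (cases t)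
  case (Y d f) then show ?thesis using stepY I tr by blast
next
  case (Z d f e) then show ?thesis using stepZ I tr by blast
next
  case (W d f a) then show ?thesis using stepW I tr by blast
qed

lemma sim:
  "run (sync TT1 TT2) q s q' \<Longrightarrow> INV q t \<Longrightarrow> \<exists>t'. run (TPO DG FG) t (map rho s) t'"
proof (induction arbitrary: t rule: run.induct)
  case (run_nil p) show ?case by (auto intro: run.run_nil)
next
  case (run_cons p a p' s q)
  obtain p1 p2 where p: "p = (p1, p2)" by (cases p)
  obtain p1' p2' where p': "p' = (p1', p2')" by (cases p')
  from step[of p1 p2 t a p1' p2'] run_cons.prems run_cons.hyps(1) p p' obtain t1 where
    t1: "(t, Ev (rho a), t1) \<in> a_trans (TPO DG FG)" "INV p' t1" by blast
  from run_cons.IH[OF t1(2)] obtain t' where "run (TPO DG FG) t1 (map rho s) t'" by blast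
  then show ?case using t1(1) by (auto intro: run.intros)
qed

lemma init_INV:
  assumes q0: "q0 \<in> a_init (sync TT1 TT2)"
  shows "\<exists>t0. t0 \<in> a_init (TPO DG FG) \<and> INV q0 t0"
proof -
  obtain q01 q02 where q: "q0 = (q01, q02)" "q01 \<in> a_init (local_TPO G1 S1 oe1 ob1 b1)"
      "q02 \<in> a_init (local_TPO G2 S2 oe2 ob2 b2)"
    using q0 by (cases q0) auto
  obtain d01 f01 where q1: "q01 = Y d01 f01" "d01 \<in> a_init (H_obd G1 S1 oe1 ob1)" "f01 \<in> a_init (H_b G1 oe1 b1)"
    using q(2) unfolding local_TPO_def TPO_init by blast
  obtain d02 f02 where q2: "q02 = Y d02 f02" "d02 \<in> a_init (H_obd G2 S2 oe2 ob2)" "f02 \<in> a_init (H_b G2 oe2 b2)"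
    using q(3) unfolding local_TPO_def TPO_init by blast
  let ?X1 = "UR G1 (a_init G1)"
  let ?X2 = "UR G2 (a_init G2)"
  have R: "RD G1 S1 oe1 ob1 d01 ?X1" "RF G1 oe1 b1 f01 ?X1" "RD G2 S2 oe2 ob2 d02 ?X2" "RF G2 oe2 b2 f02 ?X2"
    using init_RD[OF wf1 oe1 init1 q1(2)] init_RF[OF wf1 oe1 init1 q1(3)]
      init_RD[OF wf2 oe2 init2 q2(2)] init_RF[OF wf2 oe2 init2 q2(3)] by auto
  have i1: "a_init G1 \<subseteq> a_states G1" using wf1 unfolding wf_aut_def by blast
  have i2: "a_init G2 \<subseteq> a_states G2" using wf2 unfolding wf_aut_def by blast
  have U: "UR (sync G1 G2) (a_init G1 \<times> a_init G2) = ?X1 \<times> ?X2"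
    using UR_sync[OF wf1 wf2 i1 i2] by simp
  have ns: "\<not> PS (?X1 \<times> ?X2)" using prod_notsub[OF init1 init2] .
  have iF: "?X1 \<times> ?X2 \<in> a_init FG" by (simp add: det_init U)
  have iD: "?X1 \<times> ?X2 \<in> a_init DG" unfolding det_d_def desired_part_def using iF ns by simp
  have iT: "Y (?X1 \<times> ?X2) (?X1 \<times> ?X2) \<in> a_init (TPO DG FG)" unfolding TPO_init using iD iF by blast
  have rT: "Y (?X1 \<times> ?X2) (?X1 \<times> ?X2) \<in> reachable_set (TPO_raw DG FG)"
    by (rule reach_init) (use iD iF in simp)
  have rD: "?X1 \<times> ?X2 \<in> reachable_set (delete_states FG PS)"
    by (rule reach_init) (use iF ns in simp)
  have rF: "?X1 \<times> ?X2 \<in> reachable_set (det_raw (sync G1 G2))"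
    by (rule reach_init) (simp add: U)
  have "INV q0 (Y (?X1 \<times> ?X2) (?X1 \<times> ?X2))"
    by (rule INV_I[OF R _ _ _ rT rD rF]) (simp_all add: q q1 q2)
  then show ?thesis using iT by blast
qed

end


theorem theorem5:
  fixes G1 :: "('q1, 'e) aut" and G2 :: "('q2, 'e) aut"
    and S1 :: "'q1 set" and S2 :: "'q2 set"
    and oe1 :: "('q1 \<times> 'q1) set" and oe2 :: "('q2 \<times> 'q2) set"
    and ob1 b1 :: "('q1 set set \<times> 'q1 set set) set"
    and ob2 b2 :: "('q2 set set \<times> 'q2 set set) set"
  assumes wf1: "wf_aut G1" and wf2: "wf_aut G2"
    and sec1: "S1 \<subseteq> a_states G1" and sec2: "S2 \<subseteq> a_states G2"
    and init1: "\<not> UR G1 (a_init G1) \<subseteq> S1" and init2: "\<not> UR G2 (a_init G2) \<subseteq> S2"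
    and oe1: "opaque_obs_equiv G1 S1 oe1" and oe2: "opaque_obs_equiv G2 S2 oe2"
    and ob1: "opaque_bisim (det (quot G1 oe1)) (quot_set oe1 S1) ob1"
    and ob2: "opaque_bisim (det (quot G2 oe2)) (quot_set oe2 S2) ob2"
    and b1: "bisimulation (det (quot G1 oe1)) b1"
    and b2: "bisimulation (det (quot G2 oe2)) b2"
  shows "\<forall>s q0 q.
           q0 \<in> a_init (sync (transformed (local_TPO G1 S1 oe1 ob1 b1) (a_alph G1) (a_alph G2))
                              (transformed (local_TPO G2 S2 oe2 ob2 b2) (a_alph G2) (a_alph G1)))
         \<and> run (sync (transformed (local_TPO G1 S1 oe1 ob1 b1) (a_alph G1) (a_alph G2))
                     (transformed (local_TPO G2 S2 oe2 ob2 b2) (a_alph G2) (a_alph G1))) q0 s q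
         \<longrightarrow> (\<exists>t0 t. t0 \<in> a_init (TPO (det_d (sync G1 G2) (sync_secret S1 S2)) (det (sync G1 G2)))
                    \<and> run (TPO (det_d (sync G1 G2) (sync_secret S1 S2)) (det (sync G1 G2)))
                          t0 (map rho s) t)"
proof -
  interpret cfg G1 G2 S1 S2 oe1 oe2 ob1 b1 ob2 b2
    by (rule cfg.intro) (fact wf1 wf2 init1 init2 oe1 oe2 ob1 ob2 b1 b2)+
  show ?thesis
  proof (intro allI impI, elim conjE)
    fix s q0 q
    assume q0: "q0 \<in> a_init (sync (transformed (local_TPO G1 S1 oe1 ob1 b1) (a_alph G1) (a_alph G2))
                              (transformed (local_TPO G2 S2 oe2 ob2 b2) (a_alph G2) (a_alph G1)))"
      and r: "run (sync (transformed (local_TPO G1 S1 oe1 ob1 b1) (a_alph G1) (a_alph G2))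
                     (transformed (local_TPO G2 S2 oe2 ob2 b2) (a_alph G2) (a_alph G1))) q0 s q"
    from init_INV[OF q0] obtain t0 where t0: "t0 \<in> a_init (TPO (det_d (sync G1 G2) (sync_secret S1 S2)) (det (sync G1 G2)))"
      and I: "INV q0 t0" by blast
    from sim[OF r I] t0 show "\<exists>t0 t. t0 \<in> a_init (TPO (det_d (sync G1 G2) (sync_secret S1 S2)) (det (sync G1 G2)))
                    \<and> run (TPO (det_d (sync G1 G2) (sync_secret S1 S2)) (det (sync G1 G2)))
                          t0 (map rho s) t" by blast
  qed
qed

end
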